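(* In the setting described in the context, assume in addition that $(A,B)$ is controllable and let $\mathcal{X}_N=\{x\in\mathbb{R}^n:\ \exists\,U=(u_0,\dots,u_{N-1})\in\mathbb{R}^{Nm}$ with $u_k\in\mathcal{U}$ for $k=0,\dots,N-1$, $x_k(U,x)\in\mathcal{X}$ for $k=0,\dots,N-1$, and $x_N(U,x)=0\}$, where $x_k(U,x)=A^kx+\sum_{i=0}^{k-1}A^iBu_{k-1-i}$. Then for every compact set $\mathcal{X}_0\subseteq\mathcal{X}_N^\circ$ (interior of $\mathcal{X}_N$) and every $\hat{z}_{\mathrm{x,tol}}\in\mathbb{R}^{q_{\mathrm{x}}}$, $\hat{z}_{\mathrm{u,tol}}\in\mathbb{R}^{q_{\mathrm{u}}}$ with nonnegative entries, there exist $\bar{\delta}_0>0$ and $\mu\in\mathcal{K}_\infty$ such that for every relaxation parameter $0<\delta\le\bar{\delta}_0$, every $x_0\in\mathcal{X}_0$, every initialization $U_0$ with $\|U_0-\hat{U}^*(x_0)\|\le\mu(\delta)$, every sequence $\boldsymbol{i}_{\mathrm{T}}=\{i_{\mathrm{T}}(0),i_{\mathrm{T}}(1),\dots\}$ of nonnegative integers, and every $k\in\mathbb{N}$, the closed-loop trajectories (constructed with this $\delta$) with $u(k)=\Pi_0U(k)$ satisfy $C_{\mathrm{x}}x(k)\le d_{\mathrm{x}}+\hat{z}_{\mathrm{x,tol}}$ and $C_{\mathrm{u}}u(k)\le d_{\mathrm{u}}+\hat{z}_{\mathrm{u,tol}}$.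
   Context: Let $n,m,N\in\mathbb{N}_+$, $A\in\mathbb{R}^{n\times n}$, $B\in\mathbb{R}^{n\times m}$. Let $\mathcal{X}=\{x\in\mathbb{R}^n: C_{\mathrm{x}}x\le d_{\mathrm{x}}\}$ and $\mathcal{U}=\{u\in\mathbb{R}^m: C_{\mathrm{u}}u\le d_{\mathrm{u}}\}$ be compact polytopes, with $C_{\mathrm{x}}\in\mathbb{R}^{q_{\mathrm{x}}\times n}$, $C_{\mathrm{u}}\in\mathbb{R}^{q_{\mathrm{u}}\times m}$ and $d_{\mathrm{x}},d_{\mathrm{u}}$ having all entries strictly positive; superscript $i$ denotes the $i$-th row/entry, $\mathds{1}$ is the all-ones vector. Fix $\varepsilon>0$, $Q\succeq0$, $R\succ0$ (symmetric), and weight vectors $w_{\mathrm{x}},w_{\mathrm{u}}$ with nonnegative entries satisfying $C_{\mathrm{x}}^\top\mathrm{diag}(1/d_{\mathrm{x}}^1,\dots,1/d_{\mathrm{x}}^{q_{\mathrm{x}}})(\mathds{1}+w_{\mathrm{x}})=0$ and $C_{\mathrm{u}}^\top\mathrm{diag}(1/d_{\mathrm{u}}^1,\dots,1/d_{\mathrm{u}}^{q_{\mathrm{u}}})(\mathds{1}+w_{\mathrm{u}})=0$. For a relaxation parameter $\delta$ with $0<\delta\le$ the smallest entry of $d_{\mathrm{x}}$ and $d_{\mathrm{u}}$, all of the following objects depend on $\delta$. Relaxed barrier: $\hat{B}(z)=-\ln z$ for $z>\delta$, $\hat{B}(z)=\tfrac12[((z-2\delta)/\delta)^2-1]-\ln\delta$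 for $z\le\delta$. Recentered barriers: $\hat{B}_{\mathrm{x}}(x)=\sum_{i=1}^{q_{\mathrm{x}}}(1+w_{\mathrm{x}}^i)(\hat{B}(-C_{\mathrm{x}}^ix+d_{\mathrm{x}}^i)+\ln d_{\mathrm{x}}^i)$, $\hat{B}_{\mathrm{u}}(u)=\sum_{j=1}^{q_{\mathrm{u}}}(1+w_{\mathrm{u}}^j)(\hat{B}(-C_{\mathrm{u}}^ju+d_{\mathrm{u}}^j)+\ln d_{\mathrm{u}}^j)$. Stage cost $\hat{\ell}(x,u)=x^\top Qx+u^\top Ru+\varepsilon\hat{B}_{\mathrm{x}}(x)+\varepsilon\hat{B}_{\mathrm{u}}(u)$. With $M_{\mathrm{x}}=\frac{1}{2\delta^2}C_{\mathrm{x}}^\top\mathrm{diag}(\mathds{1}+w_{\mathrm{x}})C_{\mathrm{x}}$, $M_{\mathrm{u}}=\frac{1}{2\delta^2}C_{\mathrm{u}}^\top\mathrm{diag}(\mathds{1}+w_{\mathrm{u}})C_{\mathrm{u}}$, let $P\succ0$ solve $K=-(R+B^\top PB+\varepsilon M_{\mathrm{u}})^{-1}B^\top PA$, $P=(A+BK)^\top P(A+BK)+K^\top(R+\varepsilon M_{\mathrm{u}})K+Q+\varepsilon M_{\mathrm{x}}$. For $U=(u_0,\dots,u_{N-1})\in\mathbb{R}^{Nm}$, $x\in\mathbb{R}^n$, let $x_0=x$, $x_{k+1}=Ax_k+Bu_k$ and $\hat{J}_N(U,x)=\sum_{k=0}^{N-1}\hat{\ell}(x_k,u_k)+x_N^\top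 Px_N$; $\hat{U}^*(x)=\arg\min_U\hat{J}_N(U,x)$ (unique minimizer). Let $\Pi_0=[I_m\ 0\ \cdots\ 0]$ (so $\Pi_0U=u_0$). Let $k_f:\mathbb{R}^{Nm}\times\mathbb{R}^n\to\mathbb{R}^m$ be a function with $k_f(0,0)=0$ such that for all $(U,x)$, with $x^+=Ax+Bu_0$ and $U^+=(u_1,\dots,u_{N-1},k_f(U,x))$, $\hat{J}_N(U^+,x^+)-\hat{J}_N(U,x)\le-\hat{\ell}(x,u_0)$. Shift operator: $\Psi_{\mathrm{s}}(U,x)=(u_1,\dots,u_{N-1},k_f(U,x))$. Optimizer update operator: any $\Psi_{\mathrm{o}}$ with $\hat{J}_N(\Psi_{\mathrm{o}}(U,x),x)-\hat{J}_N(U,x)\le-\gamma(U,x)$ for all $(U,x)$, where $\gamma\ge0$ and $\gamma(U,x)=0\iff\nabla_U\hat{J}_N(U,x)=0$. Define $\Phi^0(U,x)=\Psi_{\mathrm{s}}(U,x)$, $\Phi^i(U,x)=\Psi_{\mathrm{o}}(\Phi^{i-1}(U,x),Ax+B\Pi_0U)$ for $i\ge1$. Closed loop: $x(k+1)=Ax(k)+B\Pi_0U(k)$, $U(k+1)=\Phi^{i_{\mathrm{T}}(k)}(U(k),x(k))$, $x(0)=x_0$, $U(0)=U_0$. A function $\mu:\mathbb{R}_+\to\mathbb{R}_+$ is in $\mathcal{K}_\infty$ if continuous, strictly increasing, $\mu(0)=0$, and unbounded. *)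

theory Defs
  imports "HOL-Analysis.Analysis"
begin

(* An input sequence U = (u_0,...,u_{N-1}) in R^{Nm} is represented as a function
   nat => real^'m that vanishes for indices >= N. *)

definition seqs :: "nat \<Rightarrow> (nat \<Rightarrow> real^'m) set" where
  "seqs N = {U. \<forall>k\<ge>N. U k = 0}"

definition seq_norm :: "nat \<Rightarrow> (nat \<Rightarrow> real^'m) \<Rightarrow> real" where
  "seq_norm N U = sqrt (\<Sum>k<N. (norm (U k))\<^sup>2)"

fun matpow :: "real^'n^'n \<Rightarrow> nat \<Rightarrow> real^'n^'n" where
  "matpow A 0 = mat 1"
| "matpow A (Suc k) = A ** matpow A k"

definition diagm :: "real^'q \<Rightarrow> real^'q^'q" where
  "diagm v = (\<chi> i j. if i = j then v $ i else 0)"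

definition polyh :: "real^'n^'q \<Rightarrow> real^'q \<Rightarrow> (real^'n) set" where
  "polyh C d = {x. \<forall>i. (C *v x) $ i \<le> d $ i}"

definition psd :: "real^'n^'n \<Rightarrow> bool" where
  "psd M \<longleftrightarrow> transpose M = M \<and> (\<forall>x. 0 \<le> x \<bullet> (M *v x))"

definition pd :: "real^'n^'n \<Rightarrow> bool" where
  "pd M \<longleftrightarrow> transpose M = M \<and> (\<forall>x. x \<noteq> 0 \<longrightarrow> 0 < x \<bullet> (M *v x))"

(* rank [B AB ... A^(n-1)B] = n : the columns of the controllability matrix span R^n *)
definition controllable :: "real^'n^'n \<Rightarrow> real^'m^'n \<Rightarrow> bool" where
  "controllable A B \<longleftrightarrow>
     span (\<Union>k\<in>{..<CARD('n)}. range (\<lambda>u. (matpow A k ** B) *v u)) = UNIV"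

definition Kinf :: "(real \<Rightarrow> real) \<Rightarrow> bool" where
  "Kinf \<mu> \<longleftrightarrow> continuous_on {0..} \<mu> \<and> strict_mono_on {0..} \<mu> \<and> \<mu> 0 = 0
     \<and> (\<forall>x\<ge>0. \<mu> x \<ge> 0) \<and> filterlim \<mu> at_top at_top"

fun traj :: "real^'n^'n \<Rightarrow> real^'m^'n \<Rightarrow> (nat \<Rightarrow> real^'m) \<Rightarrow> real^'n \<Rightarrow> nat \<Rightarrow> real^'n" where
  "traj A B U x 0 = x"
| "traj A B U x (Suc k) = A *v traj A B U x k + B *v U k"

definition feasible_set ::
  "real^'n^'n \<Rightarrow> real^'m^'n \<Rightarrow> real^'n^'qx \<Rightarrow> real^'qx \<Rightarrow> real^'m^'qu \<Rightarrow> real^'qu \<Rightarrow> nat \<Rightarrow> (real^'n) set" where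
  "feasible_set A B Cx dx Cu du N = {x. \<exists>U.
      (\<forall>k<N. U k \<in> polyh Cu du) \<and> (\<forall>k<N. traj A B U x k \<in> polyh Cx dx) \<and> traj A B U x N = 0}"

definition relbar :: "real \<Rightarrow> real \<Rightarrow> real" where
  "relbar \<delta> z = (if z > \<delta> then - ln z else ((z - 2*\<delta>)/\<delta>)\<^sup>2 / 2 - 1/2 - ln \<delta>)"

definition recbar :: "real \<Rightarrow> real^'n^'q \<Rightarrow> real^'q \<Rightarrow> real^'q \<Rightarrow> real^'n \<Rightarrow> real" where
  "recbar \<delta> C d w y = (\<Sum>i\<in>UNIV. (1 + w $ i) * (relbar \<delta> (d $ i - (C *v y) $ i) + ln (d $ i)))"

definition stage_cost ::
  "real \<Rightarrow> real \<Rightarrow> real^'n^'n \<Rightarrow> real^'m^'m \<Rightarrow> real^'n^'qx \<Rightarrow> real^'qx \<Rightarrow> real^'qx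
   \<Rightarrow> real^'m^'qu \<Rightarrow> real^'qu \<Rightarrow> real^'qu \<Rightarrow> real^'n \<Rightarrow> real^'m \<Rightarrow> real" where
  "stage_cost \<delta> \<epsilon> Q R Cx dx wx Cu du wu x u =
     x \<bullet> (Q *v x) + u \<bullet> (R *v u) + \<epsilon> * recbar \<delta> Cx dx wx x + \<epsilon> * recbar \<delta> Cu du wu u"

definition Mmat :: "real \<Rightarrow> real^'n^'q \<Rightarrow> real^'q \<Rightarrow> real^'n^'n" where
  "Mmat \<delta> C w = (1 / (2 * \<delta>\<^sup>2)) *\<^sub>R (transpose C ** diagm (\<chi> i. 1 + w $ i) ** C)"

definition gainK ::
  "real^'n^'n \<Rightarrow> real^'m^'n \<Rightarrow> real^'m^'m \<Rightarrow> real \<Rightarrow> real^'m^'m \<Rightarrow> real^'n^'n \<Rightarrow> real^'n^'m" where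
  "gainK A B R \<epsilon> Mu P = - (matrix_inv (R + transpose B ** P ** B + \<epsilon> *\<^sub>R Mu) ** (transpose B ** P ** A))"

definition cost_N ::
  "real^'n^'n \<Rightarrow> real^'m^'n \<Rightarrow> nat \<Rightarrow> (real^'n \<Rightarrow> real^'m \<Rightarrow> real) \<Rightarrow> real^'n^'n
   \<Rightarrow> (nat \<Rightarrow> real^'m) \<Rightarrow> real^'n \<Rightarrow> real" where
  "cost_N A B N l P U x =
     (\<Sum>k<N. l (traj A B U x k) (U k)) + traj A B U x N \<bullet> (P *v traj A B U x N)"

definition grad_zero :: "nat \<Rightarrow> ((nat \<Rightarrow> real^'m) \<Rightarrow> real) \<Rightarrow> (nat \<Rightarrow> real^'m) \<Rightarrow> bool" where
  "grad_zero N J U \<longleftrightarrow> (\<forall>k<N. ((\<lambda>v. J (U(k := v))) has_derivative (\<lambda>_. 0)) (at (U k)))"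

definition shiftop :: "nat \<Rightarrow> ((nat \<Rightarrow> real^'m) \<Rightarrow> real^'n \<Rightarrow> real^'m) \<Rightarrow> (nat \<Rightarrow> real^'m) \<Rightarrow> real^'n \<Rightarrow> (nat \<Rightarrow> real^'m)" where
  "shiftop N kf U x = (\<lambda>k. if k + 1 < N then U (k + 1) else if k + 1 = N then kf U x else 0)"

fun Phi :: "real^'n^'n \<Rightarrow> real^'m^'n \<Rightarrow> nat \<Rightarrow> ((nat \<Rightarrow> real^'m) \<Rightarrow> real^'n \<Rightarrow> real^'m)
   \<Rightarrow> ((nat \<Rightarrow> real^'m) \<Rightarrow> real^'n \<Rightarrow> (nat \<Rightarrow> real^'m)) \<Rightarrow> nat \<Rightarrow> (nat \<Rightarrow> real^'m) \<Rightarrow> real^'n \<Rightarrow> (nat \<Rightarrow> real^'m)" where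
  "Phi A B N kf Psio 0 U x = shiftop N kf U x"
| "Phi A B N kf Psio (Suc i) U x = Psio (Phi A B N kf Psio i U x) (A *v x + B *v U 0)"

fun closed_loop :: "real^'n^'n \<Rightarrow> real^'m^'n \<Rightarrow> nat \<Rightarrow> ((nat \<Rightarrow> real^'m) \<Rightarrow> real^'n \<Rightarrow> real^'m)
   \<Rightarrow> ((nat \<Rightarrow> real^'m) \<Rightarrow> real^'n \<Rightarrow> (nat \<Rightarrow> real^'m)) \<Rightarrow> (nat \<Rightarrow> nat) \<Rightarrow> real^'n \<Rightarrow> (nat \<Rightarrow> real^'m)
   \<Rightarrow> nat \<Rightarrow> (real^'n) \<times> (nat \<Rightarrow> real^'m)" where
  "closed_loop A B N kf Psio iT x0 U0 0 = (x0, U0)"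
| "closed_loop A B N kf Psio iT x0 U0 (Suc k) =
     (let (x, U) = closed_loop A B N kf Psio iT x0 U0 k
      in (A *v x + B *v U 0, Phi A B N kf Psio (iT k) U x))"

end

theory Submission
  imports Defs
begin

definition qb :: "real \<Rightarrow> real \<Rightarrow> real" where
  "qb \<delta> z = ((z - 2*\<delta>)/\<delta>)\<^sup>2 / 2 - 1/2 - ln \<delta>"

definition sl :: "real \<Rightarrow> real \<Rightarrow> real" where
  "sl \<delta> m = (if m > \<delta> then - 1/m else (m - 2*\<delta>)/\<delta>\<^sup>2)"

lemma relbar_q: "relbar \<delta> z = (if z > \<delta> then - ln z else qb \<delta> z)"
  by (simp add: relbar_def qb_def)

lemma qb_expand: fixes z m \<delta> :: real assumes "\<delta> > 0"
  shows "qb \<delta> z = qb \<delta> m + (m - 2*\<delta>)/\<delta>\<^sup>2 * (z - m) + (z-m)\<^sup>2/(2*\<delta>\<^sup>2)"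
  using assms unfolding qb_def by (simp add: field_simps power2_eq_square) 

lemma ln_tangent: fixes z m :: real assumes "z > 0" "m > 0" shows "ln z \<le> ln m + (z - m)/m"
proof -
  have "ln (z/m) \<le> z/m - 1" using assms ln_le_minus_one[of "z/m"] by auto
  then show ?thesis using assms by (simp add: ln_div diff_divide_distrib)
qed

lemma ln_lower: fixes z m \<delta> :: real assumes "z \<ge> \<delta>" "m \<ge> \<delta>" "\<delta> > 0"
  shows "ln z \<ge> ln m + (z - m)/m - (z-m)\<^sup>2/\<delta>\<^sup>2"
proof -
  have "ln m \<le> ln z + (m - z)/z" by (rule ln_tangent) (use assms in linarith)+
  moreover have "(z-m)/m - (z-m)/z = (z-m)\<^sup>2/(m*z)" using assms by (simp add: field_simps power2_eq_square)
  moreover have "(z-m)\<^sup>2/(m*z) \<le> (z-m)\<^sup>2/\<delta>\<^sup>2"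
  proof (rule divide_left_mono)
    show "\<delta>\<^sup>2 \<le> m*z" using assms by (simp add: power2_eq_square mult_mono)
  qed (use assms in auto)
  moreover have "(m - z)/z = - ((z-m)/z)" by (metis minus_diff_eq minus_divide_left)
  ultimately show ?thesis by linarith
qed

lemma qb_delta: fixes \<delta> :: real assumes "\<delta> > 0" shows "qb \<delta> \<delta> = - ln \<delta>"
  using assms unfolding qb_def by (simp add: field_simps power2_eq_square)

lemma relbar_tangent: fixes \<delta> z m :: real assumes d: "\<delta> > 0"
  shows "relbar \<delta> z \<ge> relbar \<delta> m + sl \<delta> m * (z - m)"
proof (cases "z > \<delta>")
  case zT: True
  show ?thesis
  proof (cases "m > \<delta>")
    case True
    have "ln z \<le> ln m + (z - m)/m" using zT True d by (intro ln_tangent) auto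
    then show ?thesis using zT True by (simp add: relbar_q sl_def)
  next
    case False
    have l: "ln z \<le> ln \<delta> + (z - \<delta>)/\<delta>" using zT d by (intro ln_tangent) auto
    have e: "qb \<delta> \<delta> = qb \<delta> m + (m - 2*\<delta>)/\<delta>\<^sup>2 * (\<delta> - m) + (\<delta>-m)\<^sup>2/(2*\<delta>\<^sup>2)"
      using d by (rule qb_expand)
    have sm: "(m - 2*\<delta>)/\<delta>\<^sup>2 \<le> - 1/\<delta>"
      using False d by (simp add: field_simps power2_eq_square)
    have "(m - 2*\<delta>)/\<delta>\<^sup>2 * (z - \<delta>) \<le> - 1/\<delta> * (z - \<delta>)"
      using sm zT by (intro mult_right_mono) auto
    moreover have "(\<delta>-m)\<^sup>2/(2*\<delta>\<^sup>2) \<ge> 0" by simp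
    moreover have "- 1/\<delta> * (z - \<delta>) = - ((z - \<delta>)/\<delta>)" by simp
    moreover have "(m - 2*\<delta>)/\<delta>\<^sup>2 * (z - m) = (m - 2*\<delta>)/\<delta>\<^sup>2 * (\<delta> - m) + (m - 2*\<delta>)/\<delta>\<^sup>2 * (z - \<delta>)"
      by (subst distrib_left[symmetric]) simp
    ultimately have "qb \<delta> m + (m - 2*\<delta>)/\<delta>\<^sup>2 * (z - m) \<le> - ln z"
      using l e qb_delta[OF d] by linarith
    then show ?thesis using zT False by (simp add: relbar_q sl_def)
  qed
next
  case zF: False
  show ?thesis
  proof (cases "m > \<delta>")
    case True
    have e: "qb \<delta> z = qb \<delta> \<delta> + (\<delta> - 2*\<delta>)/\<delta>\<^sup>2 * (z - \<delta>) + (z-\<delta>)\<^sup>2/(2*\<delta>\<^sup>2)"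
      using d by (rule qb_expand)
    have s: "(\<delta> - 2*\<delta>)/\<delta>\<^sup>2 = - 1/\<delta>" using d by (simp add: field_simps power2_eq_square)
    have l: "ln \<delta> \<le> ln m + (\<delta> - m)/m" using True d by (intro ln_tangent) auto
    have "z * (1/\<delta> - 1/m) \<le> \<delta> * (1/\<delta> - 1/m)"
      using zF True d by (intro mult_right_mono) (auto simp: field_simps)
    moreover have "\<delta> * (1/\<delta> - 1/m) = - ((\<delta> - m)/m)" using d True by (simp add: field_simps)
    moreover have "- ((z - \<delta>)/\<delta>) + (z - m)/m = - (z * (1/\<delta> - 1/m))" using d True by (simp add: field_simps)
    moreover have "(z-\<delta>)\<^sup>2/(2*\<delta>\<^sup>2) \<ge> 0" by simp
    moreover have e': "qb \<delta> z = - ln \<delta> - (z - \<delta>)/\<delta> + (z-\<delta>)\<^sup>2/(2*\<delta>\<^sup>2)"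
      using e unfolding s qb_delta[OF d] by simp
    ultimately have "qb \<delta> z \<ge> - ln m - (z - m)/m" using l by linarith
    then show ?thesis using zF True by (simp add: relbar_q sl_def)
  next
    case False
    have e: "qb \<delta> z = qb \<delta> m + (m - 2*\<delta>)/\<delta>\<^sup>2 * (z - m) + (z-m)\<^sup>2/(2*\<delta>\<^sup>2)"
      using d by (rule qb_expand)
    moreover have "(z-m)\<^sup>2/(2*\<delta>\<^sup>2) \<ge> 0" by simp
    ultimately show ?thesis using zF False by (simp add: relbar_q sl_def)
  qed
qed

lemma relbar_descent: fixes \<delta> z m :: real assumes d: "\<delta> > 0"
  shows "relbar \<delta> z \<le> relbar \<delta> m + sl \<delta> m * (z - m) + (z - m)\<^sup>2/\<delta>\<^sup>2"
proof -
  have s: "(\<delta> - 2*\<delta>)/\<delta>\<^sup>2 = - 1/\<delta>" using d by (simp add: field_simps power2_eq_square)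
  have half: "\<And>t. (t::real)\<^sup>2/(2*\<delta>\<^sup>2) \<le> t\<^sup>2/\<delta>\<^sup>2" using d by (simp add: field_simps)
  have hnn: "\<And>t. (t::real)\<^sup>2/(2*\<delta>\<^sup>2) \<ge> 0" by simp
  have ez: "\<And>a. qb \<delta> z = qb \<delta> a + (a - 2*\<delta>)/\<delta>\<^sup>2 * (z - a) + (z-a)\<^sup>2/(2*\<delta>\<^sup>2)"
    using d by (rule qb_expand)
  have ezd: "qb \<delta> z = - ln \<delta> - (z - \<delta>)/\<delta> + (z-\<delta>)\<^sup>2/(2*\<delta>\<^sup>2)"
    using ez[of \<delta>] unfolding s qb_delta[OF d] by simp
  show ?thesis
  proof (cases "z > \<delta>")
    case zT: True
    show ?thesis
    proof (cases "m > \<delta>")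
      case True
      have "ln z \<ge> ln m + (z - m)/m - (z-m)\<^sup>2/\<delta>\<^sup>2" using zT True d by (intro ln_lower) auto
      then show ?thesis using zT True by (simp add: relbar_q sl_def)
    next
      case False
      have l: "ln z \<ge> ln \<delta> + (z - \<delta>)/\<delta> - (z-\<delta>)\<^sup>2/\<delta>\<^sup>2" using zT d by (intro ln_lower) auto
      have sq: "(z-\<delta>)\<^sup>2 \<le> (z-m)\<^sup>2" using zT False by (intro power_mono) auto
      have "(z-\<delta>)\<^sup>2/\<delta>\<^sup>2 - (z-\<delta>)\<^sup>2/(2*\<delta>\<^sup>2) \<le> (z-m)\<^sup>2/\<delta>\<^sup>2 - (z-m)\<^sup>2/(2*\<delta>\<^sup>2)"
        using sq d by (simp add: field_simps)
      then have "- ln z \<le> qb \<delta> m + (m - 2*\<delta>)/\<delta>\<^sup>2 * (z - m) + (z-m)\<^sup>2/\<delta>\<^sup>2"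
        using l ez[of m] ezd by linarith
      then show ?thesis using zT False by (simp add: relbar_q sl_def)
    qed
  next
    case zF: False
    show ?thesis
    proof (cases "m > \<delta>")
      case True
      have l: "ln \<delta> \<ge> ln m + (\<delta> - m)/m - (\<delta>-m)\<^sup>2/\<delta>\<^sup>2" using True d by (intro ln_lower) auto
      define a where "a = m - \<delta>"
      define b where "b = \<delta> - z"
      have a: "a > 0" and b: "b \<ge> 0" using True zF by (auto simp: a_def b_def)
      have k1: "a*b/(m*\<delta>) \<le> a*b/\<delta>\<^sup>2"
        using a b d True by (intro divide_left_mono) (auto simp: power2_eq_square intro: mult_mono)
      have k2: "- (z-\<delta>)/\<delta> + (z - m)/m - (\<delta>-m)/m = a*b/(m*\<delta>)"
        using d True by (simp add: a_def b_def field_simps)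
      have k3: "(z-m)\<^sup>2/\<delta>\<^sup>2 - (\<delta>-m)\<^sup>2/\<delta>\<^sup>2 - (z-\<delta>)\<^sup>2/(2*\<delta>\<^sup>2) = (2*a*b + b\<^sup>2/2)/\<delta>\<^sup>2"
        using d by (simp add: a_def b_def field_simps power2_eq_square)
      have k4: "a*b/\<delta>\<^sup>2 \<le> (2*a*b + b\<^sup>2/2)/\<delta>\<^sup>2"
        using a b d by (intro divide_right_mono) (auto simp: power2_eq_square)
      have "qb \<delta> z \<le> - ln m - (z - m)/m + (z-m)\<^sup>2/\<delta>\<^sup>2"
        using ezd l k1 k2 k3 k4 by linarith
      then show ?thesis using zF True by (simp add: relbar_q sl_def)
    next
      case False
      then show ?thesis using zF ez[of m] half[of "z-m"] by (simp add: relbar_q sl_def)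
    qed
  qed
qed

lemma sl_nonpos: fixes \<delta> m :: real assumes "\<delta> > 0" shows "sl \<delta> m \<le> 0"
  using assms by (auto simp: sl_def divide_nonpos_pos)

lemma relbar_antimono: fixes \<delta> z m :: real assumes "\<delta> > 0" "z \<le> m"
  shows "relbar \<delta> m \<le> relbar \<delta> z"
proof -
  have "sl \<delta> m * (z - m) \<ge> 0" using sl_nonpos[OF assms(1)] assms(2) by (simp add: mult_nonpos_nonpos)
  then show ?thesis using relbar_tangent[OF assms(1), where z=z and m=m] by linarith
qed

lemma relbar_big: fixes \<delta> d :: real assumes "\<delta> > 0" "\<delta> \<le> d"
  shows "relbar \<delta> d = - ln d" "sl \<delta> d = - 1/d"
proof -
  show "relbar \<delta> d = - ln d"
  proof (cases "d = \<delta>")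
    case True then show ?thesis using qb_delta[OF assms(1)] by (simp add: relbar_q)
  next
    case False then show ?thesis using assms by (simp add: relbar_q)
  qed
  show "sl \<delta> d = - 1/d"
  proof (cases "d = \<delta>")
    case True then show ?thesis using assms(1) by (simp add: sl_def field_simps power2_eq_square)
  next
    case False then show ?thesis using assms by (simp add: sl_def)
  qed
qed

lemma relbar_neg: fixes \<delta> d z :: real assumes "\<delta> > 0" "\<delta> \<le> d" "z \<le> 0"
  shows "relbar \<delta> z + z/d \<ge> 3/2 - ln \<delta>"
proof -
  have e: "relbar \<delta> z = z\<^sup>2/(2*\<delta>\<^sup>2) - 2*z/\<delta> + 3/2 - ln \<delta>"
    using assms by (simp add: relbar_def field_simps power2_eq_square)
  have "1/d \<le> 2/\<delta>" using assms by (simp add: field_simps)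
  then have "z * (1/d - 2/\<delta>) \<ge> 0" using assms(3) by (intro mult_nonpos_nonpos) auto
  moreover have "z * (1/d - 2/\<delta>) = z/d - 2*z/\<delta>" by (simp add: algebra_simps)
  moreover have "z\<^sup>2/(2*\<delta>\<^sup>2) \<ge> 0" by simp
  ultimately show ?thesis using e by linarith
qed

lemma relbar_second: fixes \<delta> m h :: real assumes "\<delta> > 0"
  shows "relbar \<delta> (m + h) + relbar \<delta> (m - h) \<le> 2 * relbar \<delta> m + 2 * (h\<^sup>2/\<delta>\<^sup>2)"
proof -
  define S where "S = sl \<delta> m"
  have "relbar \<delta> (m + h) \<le> relbar \<delta> m + S * h + h\<^sup>2/\<delta>\<^sup>2"
    using relbar_descent[OF assms, where z="m+h" and m=m] by (simp add: S_def)
  moreover have "relbar \<delta> (m - h) \<le> relbar \<delta> m - S * h + h\<^sup>2/\<delta>\<^sup>2"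
    using relbar_descent[OF assms, where z="m-h" and m=m] by (simp add: S_def)
  ultimately show ?thesis by linarith
qed

lemma relbar_mid: fixes \<delta> a b :: real assumes "\<delta> > 0"
  shows "relbar \<delta> ((a + b)/2) \<le> (relbar \<delta> a + relbar \<delta> b)/2"
proof -
  define M where "M = (a+b)/2"
  define S where "S = sl \<delta> M"
  define T where "T = (a - b)/2"
  have a: "a = M + T" and b: "b = M - T" by (auto simp: M_def T_def field_simps)
  have "relbar \<delta> a \<ge> relbar \<delta> M + S * T"
    using relbar_tangent[OF assms, where z=a and m=M] a by (simp add: S_def)
  moreover have "relbar \<delta> b \<ge> relbar \<delta> M - S * T"
    using relbar_tangent[OF assms, where z=b and m=M] b by (simp add: S_def)
  ultimately have "2 * relbar \<delta> M \<le> relbar \<delta> a + relbar \<delta> b" by linarith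
  then show ?thesis unfolding M_def[symmetric] by simp
qed

lemma relbar_cont: fixes \<delta> :: real assumes "\<delta> > 0" shows "continuous_on UNIV (relbar \<delta>)"
proof -
  have eq: "relbar \<delta> = (\<lambda>z. if z \<le> \<delta> then qb \<delta> z else - ln z)"
    by (auto simp: relbar_q fun_eq_iff)
  show ?thesis unfolding eq
  proof (rule continuous_on_cases_le)
    show "continuous_on {z \<in> UNIV. z \<le> \<delta>} (qb \<delta>)" unfolding qb_def using assms by (intro continuous_intros) auto
    show "continuous_on {z \<in> UNIV. \<delta> \<le> z} (\<lambda>z. - ln z)"
      using assms by (intro continuous_intros) auto
    show "continuous_on UNIV (\<lambda>z::real. z)" by (intro continuous_intros)
    show "\<And>z. z \<in> UNIV \<Longrightarrow> z = \<delta> \<Longrightarrow> qb \<delta> z = - ln z" using qb_delta[OF assms] by simp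
  qed
qed

lemma center_sum:
  fixes C :: "real^'n^'q" and d w :: "real^'q" and y :: "real^'n"
  assumes "transpose C *v (\<chi> i. (1 + w $ i) / d $ i) = 0"
  shows "(\<Sum>i\<in>UNIV. (1 + w $ i) * ((C *v y) $ i / d $ i)) = 0"
proof -
  let ?v = "(\<chi> i. (1 + w $ i) / d $ i)"
  have "inner ?v (C *v y) = inner (transpose C *v ?v) y"
    by (simp add: dot_lmul_matrix)
  also have "\<dots> = 0" using assms by simp
  finally have "inner ?v (C *v y) = 0" .
  then show ?thesis by (simp add: inner_vec_def)
qed

lemma recbar_term_lower:
  fixes \<delta> dd c ww :: real
  assumes "\<delta> > 0" "\<delta> \<le> dd" "ww \<ge> 0"
  shows "(1 + ww) * (relbar \<delta> (dd - c) + ln dd) \<ge> (1 + ww) * (c / dd)"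
proof -
  have "relbar \<delta> (dd - c) \<ge> relbar \<delta> dd + sl \<delta> dd * ((dd - c) - dd)"
    by (rule relbar_tangent[OF assms(1)])
  then have "relbar \<delta> (dd - c) + ln dd \<ge> c / dd"
    using relbar_big[OF assms(1,2)] by simp
  then show ?thesis using assms(3) by (intro mult_left_mono) auto
qed

lemma recbar_nonneg:
  fixes C :: "real^'n^'q" and d w :: "real^'q" and y :: "real^'n"
  assumes "\<delta> > 0" "\<forall>i. \<delta> \<le> d $ i" "\<forall>i. w $ i \<ge> 0"
    "transpose C *v (\<chi> i. (1 + w $ i) / d $ i) = 0"
  shows "recbar \<delta> C d w y \<ge> 0"
proof -
  have "recbar \<delta> C d w y \<ge> (\<Sum>i\<in>UNIV. (1 + w $ i) * ((C *v y) $ i / d $ i))"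
    unfolding recbar_def
    by (rule sum_mono) (use recbar_term_lower[OF assms(1)] assms(2,3) in auto)
  then show ?thesis using center_sum[OF assms(4)] by simp
qed

lemma recbar_violation:
  fixes C :: "real^'n^'q" and d w :: "real^'q" and y :: "real^'n"
  assumes "\<delta> > 0" "\<forall>i. \<delta> \<le> d $ i" "\<forall>i. w $ i \<ge> 0"
    "transpose C *v (\<chi> i. (1 + w $ i) / d $ i) = 0"
    and viol: "(C *v y) $ j > d $ j"
    and small: "1/2 - ln \<delta> + ln (d $ j) \<ge> 0"
  shows "recbar \<delta> C d w y \<ge> 1/2 - ln \<delta> + ln (d $ j)"
proof -
  define a where "a i = relbar \<delta> (d $ i - (C *v y) $ i) + ln (d $ i)" for i
  define b where "b i = (C *v y) $ i / d $ i" for i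
  have ab: "(1 + w $ i) * (a i - b i) \<ge> 0" for i
  proof -
    have "(1 + w $ i) * a i \<ge> (1 + w $ i) * b i"
      unfolding a_def b_def using recbar_term_lower[OF assms(1)] assms(2,3) by auto
    then show ?thesis by (simp add: algebra_simps)
  qed
  have "recbar \<delta> C d w y = (\<Sum>i\<in>UNIV. (1 + w $ i) * a i)" by (simp add: recbar_def a_def)
  also have "\<dots> = (\<Sum>i\<in>UNIV. (1 + w $ i) * (a i - b i)) + (\<Sum>i\<in>UNIV. (1 + w $ i) * b i)"
    by (simp add: sum.distrib[symmetric] algebra_simps)
  also have "(\<Sum>i\<in>UNIV. (1 + w $ i) * b i) = 0" using center_sum[OF assms(4)] by (simp add: b_def)
  finally have r: "recbar \<delta> C d w y = (\<Sum>i\<in>UNIV. (1 + w $ i) * (a i - b i))" by simp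
  have "(\<Sum>i\<in>UNIV. (1 + w $ i) * (a i - b i)) \<ge> (1 + w $ j) * (a j - b j)"
    by (rule member_le_sum) (use ab in auto)
  moreover have ajbj: "a j - b j \<ge> 1/2 - ln \<delta> + ln (d $ j)"
  proof -
    define z where "z = d $ j - (C *v y) $ j"
    have z0: "z \<le> 0" using viol by (simp add: z_def)
    have dj: "\<delta> \<le> d $ j" "d $ j > 0" using assms(1,2) by (auto intro: less_le_trans)
    have "relbar \<delta> z + z / d $ j \<ge> 3/2 - ln \<delta>" by (rule relbar_neg[OF assms(1) dj(1) z0])
    moreover have "b j = 1 - z / d $ j" using dj by (simp add: b_def z_def field_simps)
    ultimately show ?thesis by (simp add: a_def z_def[symmetric])
  qed
  moreover have "(1 + w $ j) * (a j - b j) \<ge> a j - b j"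
  proof -
    have "(1 + w $ j) * (a j - b j) = (a j - b j) + w $ j * (a j - b j)" by (simp add: algebra_simps)
    moreover have "w $ j * (a j - b j) \<ge> 0" using assms(3) ajbj small by simp
    ultimately show ?thesis by simp
  qed
  ultimately show ?thesis using r by linarith
qed

lemma recbar_upper:
  fixes C :: "real^'n^'q" and d w :: "real^'q" and y :: "real^'n"
  assumes "\<delta> > 0" "\<theta> > 0" "\<forall>i. \<delta> \<le> \<theta> * d $ i" "\<forall>i. w $ i \<ge> 0"
    "\<forall>i. d $ i - (C *v y) $ i \<ge> \<theta> * d $ i"
  shows "recbar \<delta> C d w y \<le> (\<Sum>i\<in>UNIV. (1 + w $ i) * (- ln \<theta>))"
  unfolding recbar_def
proof (rule sum_mono)
  fix i
  have p: "\<theta> * d $ i > 0" using assms(1,3) by (meson less_le_trans)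
  have dpos: "d $ i > 0" using p assms(2) zero_less_mult_pos by blast
  have "relbar \<delta> (d $ i - (C *v y) $ i) \<le> relbar \<delta> (\<theta> * d $ i)"
    using relbar_antimono[OF assms(1), where z="\<theta> * d $ i" and m="d $ i - (C *v y) $ i"] assms(5) by blast
  also have "\<dots> = - ln (\<theta> * d $ i)" using relbar_big(1)[OF assms(1)] assms(3) by blast
  also have "\<dots> = - ln \<theta> - ln (d $ i)" using assms(2) dpos by (simp add: ln_mult)
  finally have "relbar \<delta> (d $ i - (C *v y) $ i) + ln (d $ i) \<le> - ln \<theta>" by simp
  then show "(1 + w $ i) * (relbar \<delta> (d $ i - (C *v y) $ i) + ln (d $ i)) \<le> (1 + w $ i) * (- ln \<theta>)"
    using assms(4) by (intro mult_left_mono) auto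
qed

lemma recbar_second:
  fixes C :: "real^'n^'q" and d w :: "real^'q" and y h :: "real^'n"
  assumes "\<delta> > 0" "\<forall>i. w $ i \<ge> 0"
  shows "recbar \<delta> C d w (y + h) + recbar \<delta> C d w (y - h) \<le> 2 * recbar \<delta> C d w y
     + (\<Sum>i\<in>UNIV. (1 + w $ i) * (2 * (((C *v h) $ i)\<^sup>2/\<delta>\<^sup>2)))"
proof -
  have t: "(1 + w $ i) * (relbar \<delta> (d $ i - (C *v (y + h)) $ i) + ln (d $ i))
      + (1 + w $ i) * (relbar \<delta> (d $ i - (C *v (y - h)) $ i) + ln (d $ i))
      \<le> 2 * ((1 + w $ i) * (relbar \<delta> (d $ i - (C *v y) $ i) + ln (d $ i)))
        + (1 + w $ i) * (2 * (((C *v h) $ i)\<^sup>2/\<delta>\<^sup>2))" for i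
  proof -
    have "relbar \<delta> ((d $ i - (C *v y) $ i) + (- (C *v h) $ i)) + relbar \<delta> ((d $ i - (C *v y) $ i) - (- (C *v h) $ i))
        \<le> 2 * relbar \<delta> (d $ i - (C *v y) $ i) + 2 * ((- (C *v h) $ i)\<^sup>2/\<delta>\<^sup>2)"
      by (rule relbar_second[OF assms(1)])
    then have "relbar \<delta> (d $ i - (C *v (y + h)) $ i) + relbar \<delta> (d $ i - (C *v (y - h)) $ i)
        \<le> 2 * relbar \<delta> (d $ i - (C *v y) $ i) + 2 * (((C *v h) $ i)\<^sup>2/\<delta>\<^sup>2)"
      by (simp add: matrix_vector_right_distrib matrix_vector_mult_diff_distrib algebra_simps)
    then have "(1 + w $ i) * (relbar \<delta> (d $ i - (C *v (y + h)) $ i) + relbar \<delta> (d $ i - (C *v (y - h)) $ i))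
        \<le> (1 + w $ i) * (2 * relbar \<delta> (d $ i - (C *v y) $ i) + 2 * (((C *v h) $ i)\<^sup>2/\<delta>\<^sup>2))"
      using assms(2) by (intro mult_left_mono) auto
    then show ?thesis by (simp add: algebra_simps)
  qed
  have "(\<Sum>i\<in>UNIV. (1 + w $ i) * (relbar \<delta> (d $ i - (C *v (y + h)) $ i) + ln (d $ i))
      + (1 + w $ i) * (relbar \<delta> (d $ i - (C *v (y - h)) $ i) + ln (d $ i)))
      \<le> (\<Sum>i\<in>UNIV. 2 * ((1 + w $ i) * (relbar \<delta> (d $ i - (C *v y) $ i) + ln (d $ i)))
        + (1 + w $ i) * (2 * (((C *v h) $ i)\<^sup>2/\<delta>\<^sup>2)))"
    by (rule sum_mono) (rule t)
  then show ?thesis unfolding recbar_def by (simp add: sum.distrib sum_distrib_left)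
qed

lemma recbar_mid:
  fixes C :: "real^'n^'q" and d w :: "real^'q" and a b :: "real^'n"
  assumes "\<delta> > 0" "\<forall>i. w $ i \<ge> 0"
  shows "recbar \<delta> C d w ((1/2) *\<^sub>R (a + b)) \<le> (recbar \<delta> C d w a + recbar \<delta> C d w b) / 2"
proof -
  have t: "(1 + w $ i) * (relbar \<delta> (d $ i - (C *v ((1/2) *\<^sub>R (a + b))) $ i) + ln (d $ i))
      \<le> ((1 + w $ i) * (relbar \<delta> (d $ i - (C *v a) $ i) + ln (d $ i))
        + (1 + w $ i) * (relbar \<delta> (d $ i - (C *v b) $ i) + ln (d $ i))) / 2" for i
  proof -
    have X: "relbar \<delta> (((d $ i - (C *v a) $ i) + (d $ i - (C *v b) $ i))/2)
       \<le> (relbar \<delta> (d $ i - (C *v a) $ i) + relbar \<delta> (d $ i - (C *v b) $ i))/2"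
      by (rule relbar_mid[OF assms(1)])
    have eq: "(C *v ((1/2) *\<^sub>R (a + b))) $ i = ((C *v a) $ i + (C *v b) $ i)/2"
      by (simp add: matrix_vector_mult_scaleR matrix_vector_right_distrib)
    have E: "((d $ i - (C *v a) $ i) + (d $ i - (C *v b) $ i))/2 = d $ i - (C *v ((1/2) *\<^sub>R (a + b))) $ i"
      unfolding eq by (simp add: field_simps)
    have "relbar \<delta> (d $ i - (C *v ((1/2) *\<^sub>R (a + b))) $ i)
       \<le> (relbar \<delta> (d $ i - (C *v a) $ i) + relbar \<delta> (d $ i - (C *v b) $ i))/2"
      using X unfolding E .
    then have "(1 + w $ i) * relbar \<delta> (d $ i - (C *v ((1/2) *\<^sub>R (a + b))) $ i)
       \<le> (1 + w $ i) * ((relbar \<delta> (d $ i - (C *v a) $ i) + relbar \<delta> (d $ i - (C *v b) $ i))/2)"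
      using assms(2) by (intro mult_left_mono) auto
    then show ?thesis by (simp add: algebra_simps add_divide_distrib)
  qed
  have "(\<Sum>i\<in>UNIV. (1 + w $ i) * (relbar \<delta> (d $ i - (C *v ((1/2) *\<^sub>R (a + b))) $ i) + ln (d $ i)))
      \<le> (\<Sum>i\<in>UNIV. ((1 + w $ i) * (relbar \<delta> (d $ i - (C *v a) $ i) + ln (d $ i))
        + (1 + w $ i) * (relbar \<delta> (d $ i - (C *v b) $ i) + ln (d $ i))) / 2)"
    by (rule sum_mono) (rule t)
  moreover have "(\<Sum>i\<in>UNIV. ((1 + w $ i) * (relbar \<delta> (d $ i - (C *v a) $ i) + ln (d $ i))
        + (1 + w $ i) * (relbar \<delta> (d $ i - (C *v b) $ i) + ln (d $ i))) / 2)
     = ((\<Sum>i\<in>UNIV. (1 + w $ i) * (relbar \<delta> (d $ i - (C *v a) $ i) + ln (d $ i)))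
        + (\<Sum>i\<in>UNIV. (1 + w $ i) * (relbar \<delta> (d $ i - (C *v b) $ i) + ln (d $ i)))) / 2"
    by (subst sum_divide_distrib[symmetric]) (simp only: sum.distrib)
  ultimately show ?thesis unfolding recbar_def by linarith
qed

definition qf :: "real^'n^'n \<Rightarrow> real^'n \<Rightarrow> real" where
  "qf M x = x \<bullet> (M *v x)"

lemma qf_second: "qf M (a + h) + qf M (a - h) = 2 * qf M a + 2 * qf M h"
  unfolding qf_def by (simp add: matrix_vector_right_distrib matrix_vector_mult_diff_distrib
      inner_add_left inner_add_right inner_diff_left inner_diff_right)

lemma qf_mid: "qf M ((1/2) *\<^sub>R (a + b)) = (qf M a + qf M b)/2 - qf M (a - b)/4"
  unfolding qf_def by (simp add: matrix_vector_right_distrib matrix_vector_mult_diff_distrib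
      matrix_vector_mult_scaleR inner_add_left inner_add_right inner_diff_left inner_diff_right field_simps)

lemma matvec_bound: fixes M :: "real^'n^'m" shows "\<exists>K\<ge>0. \<forall>x. norm (M *v x) \<le> K * norm x"
proof -
  have "bounded_linear (\<lambda>x. M *v x)" by (simp add: matrix_vector_mul_bounded_linear)
  then obtain K where "K > 0" "\<And>x. norm (M *v x) \<le> norm x * K"
    using bounded_linear.pos_bounded by blast
  then show ?thesis by (metis less_le mult.commute)
qed

lemma qf_bound: fixes M :: "real^'n^'n" shows "\<exists>K\<ge>0. \<forall>x. \<bar>qf M x\<bar> \<le> K * (norm x)\<^sup>2"
proof -
  obtain K where K: "K \<ge> 0" "\<And>x. norm (M *v x) \<le> K * norm x" using matvec_bound by blast
  have "\<bar>qf M x\<bar> \<le> K * (norm x)\<^sup>2" for x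
  proof -
    have "\<bar>qf M x\<bar> \<le> norm x * norm (M *v x)" unfolding qf_def by (rule Cauchy_Schwarz_ineq2)
    also have "\<dots> \<le> norm x * (K * norm x)" using K by (intro mult_left_mono) auto
    finally show ?thesis by (simp add: power2_eq_square algebra_simps)
  qed
  then show ?thesis using K by blast
qed

lemma traj_add: "traj A B (\<lambda>j. U j + V j) (x + y) k = traj A B U x k + traj A B V y k"
  by (induction k) (auto simp: matrix_vector_right_distrib algebra_simps)

lemma traj_scale: "traj A B (\<lambda>j. c *\<^sub>R U j) (c *\<^sub>R x) k = c *\<^sub>R traj A B U x k"
  by (induction k) (auto simp: matrix_vector_right_distrib matrix_vector_mult_scaleR scaleR_add_right)

lemma traj_diff: "traj A B (\<lambda>j. U j - V j) (x - y) k = traj A B U x k - traj A B V y k"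
proof -
  have "traj A B (\<lambda>j. U j + (\<lambda>j. (-1) *\<^sub>R V j) j) (x + (-1) *\<^sub>R y) k
      = traj A B U x k + traj A B (\<lambda>j. (-1) *\<^sub>R V j) ((-1) *\<^sub>R y) k"
    by (rule traj_add)
  also have "traj A B (\<lambda>j. (-1) *\<^sub>R V j) ((-1) *\<^sub>R y) k = (-1) *\<^sub>R traj A B V y k"
    by (rule traj_scale)
  finally show ?thesis by simp
qed

lemma traj_cong: "(\<And>j. j < k \<Longrightarrow> U j = V j) \<Longrightarrow> traj A B U x k = traj A B V x k"
  by (induction k) auto

lemma traj_cont: "continuous_on UNIV (\<lambda>U. traj A B U x k)"
proof (induction k)
  case 0 then show ?case by simp
next
  case (Suc k)
  have l1: "continuous_on UNIV (\<lambda>U. A *v traj A B U x k)"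
    by (rule continuous_on_compose2[OF matrix_vector_mult_linear_continuous_on Suc]) auto
  have l2: "continuous_on UNIV (\<lambda>U. B *v U k)"
    by (rule continuous_on_compose2[OF matrix_vector_mult_linear_continuous_on continuous_on_product_coordinates]) auto
  show ?case using continuous_on_add[OF l1 l2] by simp
qed

lemma seq_norm_ge: "k < N \<Longrightarrow> norm (U k) \<le> seq_norm N U"
proof -
  assume k: "k < N"
  have "(norm (U k))\<^sup>2 \<le> (\<Sum>j<N. (norm (U j))\<^sup>2)"
    by (rule member_le_sum) (use k in auto)
  then have "sqrt ((norm (U k))\<^sup>2) \<le> seq_norm N U" unfolding seq_norm_def by (rule real_sqrt_le_mono)
  then show ?thesis by simp
qed

lemma seq_norm_nonneg: "seq_norm N U \<ge> 0" unfolding seq_norm_def by (simp add: sum_nonneg)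

fun Lseq :: "real \<Rightarrow> real \<Rightarrow> nat \<Rightarrow> real" where
  "Lseq a b 0 = 0" | "Lseq a b (Suc k) = a * Lseq a b k + b"

lemma Lseq_nonneg: "a \<ge> 0 \<Longrightarrow> b \<ge> 0 \<Longrightarrow> Lseq a b k \<ge> 0"
  by (induction k) auto

lemma traj_bound: fixes A :: "real^'n^'n" and B :: "real^'m^'n"
  shows "\<exists>L\<ge>0. \<forall>U k. k \<le> N \<longrightarrow> norm (traj A B U 0 k) \<le> L * seq_norm N U"
proof -
  obtain a where a: "a \<ge> 0" "\<And>x. norm (A *v x) \<le> a * norm x" using matvec_bound by blast
  obtain b where b: "b \<ge> 0" "\<And>x. norm (B *v x) \<le> b * norm x" using matvec_bound by blast
  have main: "k \<le> N \<Longrightarrow> norm (traj A B U 0 k) \<le> Lseq a b k * seq_norm N U" for U k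
  proof (induction k)
    case 0 then show ?case by simp
  next
    case (Suc k)
    have "norm (traj A B U 0 (Suc k)) \<le> norm (A *v traj A B U 0 k) + norm (B *v U k)"
      by (simp add: norm_triangle_ineq)
    also have "\<dots> \<le> a * norm (traj A B U 0 k) + b * norm (U k)" using a b by (intro add_mono) auto
    also have "\<dots> \<le> a * (Lseq a b k * seq_norm N U) + b * seq_norm N U"
      using Suc a b seq_norm_ge[of k N U] by (intro add_mono mult_left_mono) auto
    finally show ?case by (simp add: algebra_simps)
  qed
  define L where "L = (\<Sum>k\<le>N. Lseq a b k)"
  have "Lseq a b k \<le> L" if "k \<le> N" for k
    unfolding L_def by (rule member_le_sum) (use that a b Lseq_nonneg in auto)
  then have "k \<le> N \<Longrightarrow> norm (traj A B U 0 k) \<le> L * seq_norm N U" for U k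
    using main[of k U] seq_norm_nonneg[of N U] by (meson mult_right_mono order_trans)
  moreover have "L \<ge> 0" unfolding L_def using a b Lseq_nonneg by (simp add: sum_nonneg)
  ultimately show ?thesis by blast
qed

lemma qf_scale: "qf M (c *\<^sub>R x) = c\<^sup>2 * qf M x"
  unfolding qf_def by (simp add: matrix_vector_mult_scaleR power2_eq_square)

lemma psd_qf: "psd M \<Longrightarrow> qf M x \<ge> 0" unfolding psd_def qf_def by auto

lemma pd_qf: "pd M \<Longrightarrow> qf M x \<ge> 0" unfolding pd_def qf_def by (cases "x = 0") auto

lemma pd_qf_pos: "pd M \<Longrightarrow> x \<noteq> 0 \<Longrightarrow> qf M x > 0" unfolding pd_def qf_def by auto

lemma qf_cont: "continuous_on S (\<lambda>x. qf M (f x))" if "continuous_on S f"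
  unfolding qf_def by (intro continuous_intros that continuous_on_compose2[OF matrix_vector_mult_linear_continuous_on that]) auto

lemma pd_lower: fixes R :: "real^'m^'m" assumes "pd R"
  shows "\<exists>c>0. \<forall>u. qf R u \<ge> c * (norm u)\<^sup>2"
proof -
  obtain i :: 'm where True by simp
  have ne: "sphere (0::real^'m) 1 \<noteq> {}"
    using norm_axis_1[of i] by (auto simp: sphere_def dist_norm intro!: exI[of _ "axis i 1"])
  have "continuous_on (sphere 0 1) (\<lambda>u. qf R u)"
    by (rule qf_cont) (rule continuous_on_id)
  then obtain u0 where u0: "u0 \<in> sphere 0 1" "\<And>v. v \<in> sphere 0 1 \<Longrightarrow> qf R u0 \<le> qf R v"
    using continuous_attains_inf[OF compact_sphere ne] by blast
  have "u0 \<noteq> 0" using u0(1) by auto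
  then have pos: "qf R u0 > 0" using pd_qf_pos[OF assms] by blast
  have "qf R u \<ge> qf R u0 * (norm u)\<^sup>2" for u
  proof (cases "u = 0")
    case True then show ?thesis by (simp add: qf_def)
  next
    case False
    have "(1/norm u) *\<^sub>R u \<in> sphere 0 1" using False by (simp add: sphere_def dist_norm)
    then have "qf R u0 \<le> qf R ((1/norm u) *\<^sub>R u)" by (rule u0(2))
    also have "\<dots> = qf R u / (norm u)\<^sup>2" by (simp add: qf_scale power2_eq_square field_simps)
    finally show ?thesis using False by (simp add: field_simps)
  qed
  then show ?thesis using pos by blast
qed

lemma seqs_zero: "(\<lambda>_. 0) \<in> seqs N" by (simp add: seqs_def)

lemma argmin_unique:
  fixes F :: "(nat \<Rightarrow> real^'m) \<Rightarrow> real" and R :: "real^'m^'m"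
  assumes cont: "continuous_on UNIV F"
    and coer: "\<And>U k. U \<in> seqs N \<Longrightarrow> k < N \<Longrightarrow> F U \<ge> qf R (U k)"
    and mid: "\<And>U V. U \<in> seqs N \<Longrightarrow> V \<in> seqs N \<Longrightarrow>
        F (\<lambda>k. (1/2) *\<^sub>R (U k + V k)) \<le> (F U + F V)/2 - (\<Sum>k<N. qf R (U k - V k))/4"
    and R: "pd R"
  shows "\<exists>!U. U \<in> seqs N \<and> (\<forall>V\<in>seqs N. F U \<le> F V)"
proof -
  obtain lm where lam: "lm > 0" "\<And>u. qf R u \<ge> lm * (norm u)\<^sup>2" using pd_lower[OF R] by blast
  define r where "r = sqrt ((\<bar>F (\<lambda>_. 0)\<bar> + 1) / lm)"
  have r2: "lm * r\<^sup>2 = \<bar>F (\<lambda>_. 0)\<bar> + 1" using lam(1) by (simp add: r_def)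
  have r0: "r \<ge> 0" unfolding r_def using lam(1) by simp
  define S where "S = PiE UNIV (\<lambda>k. if k < N then cball (0::real^'m) r else {0})"
  have "compactin (product_topology (\<lambda>_. euclidean) UNIV) S"
    unfolding S_def compactin_PiE by auto
  then have compS: "compact S" by (simp add: euclidean_product_topology)
  have zS: "(\<lambda>_. 0) \<in> S" unfolding S_def using r0 by auto
  have Sseqs: "S \<subseteq> seqs N"
  proof
    fix U assume "U \<in> S"
    then have *: "\<And>k. U k \<in> (if k < N then cball 0 r else {0})" unfolding S_def by (simp add: PiE_iff)
    have "\<forall>k\<ge>N. U k = 0"
    proof (intro allI impI)
      fix k assume "N \<le> k" with *[of k] show "U k = 0" by simp
    qed
    then show "U \<in> seqs N" unfolding seqs_def by simp
  qed
  obtain T where T: "T \<in> S" "\<And>V. V \<in> S \<Longrightarrow> F T \<le> F V"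
    using continuous_attains_inf[OF compS _ continuous_on_subset[OF cont]] zS by blast
  have Tmin: "F T \<le> F V" if V: "V \<in> seqs N" for V
  proof (cases "V \<in> S")
    case True then show ?thesis using T by blast
  next
    case False
    then obtain k where k0: "V k \<notin> (if k < N then cball 0 r else {0})"
      unfolding S_def by (auto simp: PiE_iff)
    have kN: "k < N"
    proof (rule ccontr)
      assume "\<not> k < N" then show False using k0 V by (simp add: seqs_def)
    qed
    then have "norm (V k) > r" using k0 by (simp add: mem_cball_0 not_le)
    note k = kN this
    have "r\<^sup>2 \<le> (norm (V k))\<^sup>2" using k r0 by (intro power_mono) auto
    then have "lm * r\<^sup>2 \<le> lm * (norm (V k))\<^sup>2" using lam(1) by simp
    then have "F V \<ge> \<bar>F (\<lambda>_. 0)\<bar> + 1" using coer[OF V k(1)] lam(2)[of "V k"] r2 by linarith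
    moreover have "F T \<le> F (\<lambda>_. 0)" using T(2) zS by blast
    ultimately show ?thesis by linarith
  qed
  have ex: "T \<in> seqs N \<and> (\<forall>V\<in>seqs N. F T \<le> F V)" using T(1) Sseqs Tmin by blast
  have uniq: "U1 = U2" if U1: "U1 \<in> seqs N \<and> (\<forall>V\<in>seqs N. F U1 \<le> F V)"
     and U2: "U2 \<in> seqs N \<and> (\<forall>V\<in>seqs N. F U2 \<le> F V)" for U1 U2
  proof -
    define M where "M = (\<lambda>k. (1/2) *\<^sub>R (U1 k + U2 k))"
    have ms: "M \<in> seqs N" using U1 U2 by (simp add: seqs_def M_def)
    have e: "F U1 = F U2" using U1 U2 by (meson order_antisym)
    have a: "F U1 \<le> F M" using U1 ms by blast
    have b: "F M \<le> (F U1 + F U2)/2 - (\<Sum>k<N. qf R (U1 k - U2 k))/4"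
      unfolding M_def using mid U1 U2 by blast
    define S where "S = (\<Sum>k<N. qf R (U1 k - U2 k))"
    have b': "F M \<le> (F U1 + F U2)/2 - S/4" using b unfolding S_def .
    have "S \<le> 0" using e a b' by (simp add: field_simps)
    then have s: "(\<Sum>k<N. qf R (U1 k - U2 k)) \<le> 0" unfolding S_def .
    have nn: "\<forall>k\<in>{..<N}. qf R (U1 k - U2 k) \<ge> 0" using pd_qf[OF R] by blast
    have "(\<Sum>k<N. qf R (U1 k - U2 k)) \<ge> 0" using nn by (intro sum_nonneg) auto
    then have s0: "(\<Sum>k<N. qf R (U1 k - U2 k)) = 0" using s by linarith
    have "\<forall>k\<in>{..<N}. qf R (U1 k - U2 k) = 0"
      using sum_nonneg_eq_0_iff[of "{..<N}" "\<lambda>k. qf R (U1 k - U2 k)"] nn s0 by auto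
    then have "\<forall>k<N. U1 k = U2 k" using pd_qf_pos[OF R] by (metis lessThan_iff less_irrefl right_minus_eq)
    moreover have "\<forall>k\<ge>N. U1 k = U2 k" using U1 U2 by (simp add: seqs_def)
    ultimately show ?thesis by (metis not_le ext)
  qed
  show ?thesis using ex uniq by blast
qed

lemma stage_qf: "stage_cost \<delta> \<epsilon> Q R Cx dx wx Cu du wu x u =
   qf Q x + qf R u + \<epsilon> * recbar \<delta> Cx dx wx x + \<epsilon> * recbar \<delta> Cu du wu u"
  by (simp add: stage_cost_def qf_def)

definition RX :: "real \<Rightarrow> real^'n^'q \<Rightarrow> real^'q \<Rightarrow> real^'n \<Rightarrow> real" where
  "RX \<delta> C w h = (\<Sum>i\<in>UNIV. (1 + w $ i) * (2 * (((C *v h) $ i)\<^sup>2/\<delta>\<^sup>2)))"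

lemma stage_second:
  assumes "\<delta> > 0" "\<epsilon> \<ge> 0" "\<forall>i. wx $ i \<ge> 0" "\<forall>j. wu $ j \<ge> 0"
  shows "stage_cost \<delta> \<epsilon> Q R Cx dx wx Cu du wu (y + h) (u + e) + stage_cost \<delta> \<epsilon> Q R Cx dx wx Cu du wu (y - h) (u - e)
    \<le> 2 * stage_cost \<delta> \<epsilon> Q R Cx dx wx Cu du wu y u
      + (2 * qf Q h + 2 * qf R e + \<epsilon> * RX \<delta> Cx wx h + \<epsilon> * RX \<delta> Cu wu e)"
proof -
  have x: "recbar \<delta> Cx dx wx (y + h) + recbar \<delta> Cx dx wx (y - h) \<le> 2 * recbar \<delta> Cx dx wx y + RX \<delta> Cx wx h"
    using recbar_second[OF assms(1,3)] by (simp add: RX_def)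
  have u: "recbar \<delta> Cu du wu (u + e) + recbar \<delta> Cu du wu (u - e) \<le> 2 * recbar \<delta> Cu du wu u + RX \<delta> Cu wu e"
    using recbar_second[OF assms(1,4)] by (simp add: RX_def)
  have x': "\<epsilon> * recbar \<delta> Cx dx wx (y + h) + \<epsilon> * recbar \<delta> Cx dx wx (y - h) \<le> 2 * (\<epsilon> * recbar \<delta> Cx dx wx y) + \<epsilon> * RX \<delta> Cx wx h"
    using mult_left_mono[OF x assms(2)] by (simp add: algebra_simps)
  have u': "\<epsilon> * recbar \<delta> Cu du wu (u + e) + \<epsilon> * recbar \<delta> Cu du wu (u - e) \<le> 2 * (\<epsilon> * recbar \<delta> Cu du wu u) + \<epsilon> * RX \<delta> Cu wu e"
    using mult_left_mono[OF u assms(2)] by (simp add: algebra_simps)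
  show ?thesis unfolding stage_qf using x' u' qf_second[of Q y h] qf_second[of R u e]
    by (simp only: distrib_left)
qed

lemma cost_second:
  assumes "\<delta> > 0" "\<epsilon> \<ge> 0" "\<forall>i. wx $ i \<ge> 0" "\<forall>j. wu $ j \<ge> 0"
  shows "cost_N A B N (stage_cost \<delta> \<epsilon> Q R Cx dx wx Cu du wu) P (\<lambda>k. U k + D k) x
     + cost_N A B N (stage_cost \<delta> \<epsilon> Q R Cx dx wx Cu du wu) P (\<lambda>k. U k - D k) x
    \<le> 2 * cost_N A B N (stage_cost \<delta> \<epsilon> Q R Cx dx wx Cu du wu) P U x
      + ((\<Sum>k<N. 2 * qf Q (traj A B D 0 k) + 2 * qf R (D k) + \<epsilon> * RX \<delta> Cx wx (traj A B D 0 k)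
           + \<epsilon> * RX \<delta> Cu wu (D k)) + 2 * qf P (traj A B D 0 N))"
proof -
  let ?s = "stage_cost \<delta> \<epsilon> Q R Cx dx wx Cu du wu"
  have tp: "traj A B (\<lambda>k. U k + D k) x k = traj A B U x k + traj A B D 0 k" for k
    using traj_add[of A B U D x 0 k] by simp
  have tm: "traj A B (\<lambda>k. U k - D k) x k = traj A B U x k - traj A B D 0 k" for k
    using traj_diff[of A B U D x 0 k] by simp
  have st: "?s (traj A B (\<lambda>k. U k + D k) x k) (U k + D k) + ?s (traj A B (\<lambda>k. U k - D k) x k) (U k - D k)
     \<le> 2 * ?s (traj A B U x k) (U k) + (2 * qf Q (traj A B D 0 k) + 2 * qf R (D k) + \<epsilon> * RX \<delta> Cx wx (traj A B D 0 k)
           + \<epsilon> * RX \<delta> Cu wu (D k))" for k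
    unfolding tp tm by (rule stage_second[OF assms])
  have "(\<Sum>k<N. ?s (traj A B (\<lambda>k. U k + D k) x k) (U k + D k) + ?s (traj A B (\<lambda>k. U k - D k) x k) (U k - D k))
     \<le> (\<Sum>k<N. 2 * ?s (traj A B U x k) (U k) + (2 * qf Q (traj A B D 0 k) + 2 * qf R (D k) + \<epsilon> * RX \<delta> Cx wx (traj A B D 0 k)
           + \<epsilon> * RX \<delta> Cu wu (D k)))"
    by (rule sum_mono) (rule st)
  moreover have "qf P (traj A B (\<lambda>k. U k + D k) x N) + qf P (traj A B (\<lambda>k. U k - D k) x N)
     = 2 * qf P (traj A B U x N) + 2 * qf P (traj A B D 0 N)"
    unfolding tp tm by (rule qf_second)
  ultimately show ?thesis unfolding cost_N_def qf_def[symmetric]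
    by (simp add: sum.distrib sum_distrib_left)
qed

lemma cost_mid:
  assumes "\<delta> > 0" "\<epsilon> \<ge> 0" "\<forall>i. wx $ i \<ge> 0" "\<forall>j. wu $ j \<ge> 0" "psd Q" "\<forall>z. qf P z \<ge> 0"
  shows "cost_N A B N (stage_cost \<delta> \<epsilon> Q R Cx dx wx Cu du wu) P (\<lambda>k. (1/2) *\<^sub>R (U k + V k)) x
    \<le> (cost_N A B N (stage_cost \<delta> \<epsilon> Q R Cx dx wx Cu du wu) P U x
       + cost_N A B N (stage_cost \<delta> \<epsilon> Q R Cx dx wx Cu du wu) P V x)/2
      - (\<Sum>k<N. qf R (U k - V k))/4"
proof -
  let ?s = "stage_cost \<delta> \<epsilon> Q R Cx dx wx Cu du wu"
  have tmid: "traj A B (\<lambda>k. (1/2) *\<^sub>R (U k + V k)) x k = (1/2) *\<^sub>R (traj A B U x k + traj A B V x k)" for k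
  proof -
    have "traj A B (\<lambda>k. (1/2) *\<^sub>R (U k + V k)) ((1/2) *\<^sub>R (x + x)) k
        = (1/2) *\<^sub>R traj A B (\<lambda>k. U k + V k) (x + x) k"
      by (rule traj_scale)
    moreover have "(1/2) *\<^sub>R (x + x) = x" by (simp add: scaleR_add_right[symmetric])
    ultimately show ?thesis using traj_add[of A B U V x x k] by simp
  qed
  have st: "?s (traj A B (\<lambda>k. (1/2) *\<^sub>R (U k + V k)) x k) ((1/2) *\<^sub>R (U k + V k))
     \<le> (?s (traj A B U x k) (U k) + ?s (traj A B V x k) (V k))/2 - qf R (U k - V k)/4" for k
  proof -
    let ?a = "traj A B U x k" and ?b = "traj A B V x k"
    have q1: "qf Q ((1/2) *\<^sub>R (?a + ?b)) \<le> (qf Q ?a + qf Q ?b)/2"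
      using qf_mid[of Q ?a ?b] psd_qf[OF assms(5), of "?a - ?b"] by linarith
    have q2: "qf R ((1/2) *\<^sub>R (U k + V k)) = (qf R (U k) + qf R (V k))/2 - qf R (U k - V k)/4"
      by (rule qf_mid)
    have r1: "\<epsilon> * recbar \<delta> Cx dx wx ((1/2) *\<^sub>R (?a + ?b)) \<le> \<epsilon> * ((recbar \<delta> Cx dx wx ?a + recbar \<delta> Cx dx wx ?b)/2)"
      using recbar_mid[OF assms(1,3)] assms(2) by (intro mult_left_mono) auto
    have r2: "\<epsilon> * recbar \<delta> Cu du wu ((1/2) *\<^sub>R (U k + V k)) \<le> \<epsilon> * ((recbar \<delta> Cu du wu (U k) + recbar \<delta> Cu du wu (V k))/2)"
      using recbar_mid[OF assms(1,4)] assms(2) by (intro mult_left_mono) auto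
    show ?thesis unfolding tmid stage_qf using q1 q2 r1 r2 by (simp add: field_simps)
  qed
  have s1: "(\<Sum>k<N. ?s (traj A B (\<lambda>k. (1/2) *\<^sub>R (U k + V k)) x k) ((1/2) *\<^sub>R (U k + V k)))
     \<le> (\<Sum>k<N. (?s (traj A B U x k) (U k) + ?s (traj A B V x k) (V k))/2 - qf R (U k - V k)/4)"
    by (rule sum_mono) (rule st)
  have s2: "(\<Sum>k<N. (?s (traj A B U x k) (U k) + ?s (traj A B V x k) (V k))/2 - qf R (U k - V k)/4)
     = ((\<Sum>k<N. ?s (traj A B U x k) (U k)) + (\<Sum>k<N. ?s (traj A B V x k) (V k)))/2 - (\<Sum>k<N. qf R (U k - V k))/4"
    by (simp only: sum_subtractf sum_divide_distrib[symmetric] sum.distrib)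
  have t: "qf P ((1/2) *\<^sub>R (traj A B U x N + traj A B V x N)) \<le> (qf P (traj A B U x N) + qf P (traj A B V x N))/2"
    using qf_mid[of P "traj A B U x N" "traj A B V x N"] assms(6)[rule_format, of "traj A B U x N - traj A B V x N"] by linarith
  have aux: "\<And>sm su sv sr tm tu tv :: real. sm \<le> (su+sv)/2 - sr/4 \<Longrightarrow> tm \<le> (tu+tv)/2 \<Longrightarrow>
     sm + tm \<le> ((su+tu) + (sv+tv))/2 - sr/4" by (simp add: field_simps)
  show ?thesis unfolding cost_N_def qf_def[symmetric]
  proof (rule aux)
    show "qf P (traj A B (\<lambda>k. (1/2) *\<^sub>R (U k + V k)) x N) \<le> (qf P (traj A B U x N) + qf P (traj A B V x N))/2"
      unfolding tmid by (rule t)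
  qed (use s1 s2 in linarith)
qed

lemma stage_ge:
  assumes "\<delta> > 0" "\<forall>i. \<delta> \<le> dx $ i" "\<forall>j. \<delta> \<le> du $ j" "\<forall>i. wx $ i \<ge> 0" "\<forall>j. wu $ j \<ge> 0"
    "transpose Cx *v (\<chi> i. (1 + wx $ i) / dx $ i) = 0"
    "transpose Cu *v (\<chi> i. (1 + wu $ i) / du $ i) = 0"
    "psd Q" "pd R" "\<epsilon> > 0"
  shows "stage_cost \<delta> \<epsilon> Q R Cx dx wx Cu du wu x u \<ge> \<epsilon> * recbar \<delta> Cx dx wx x"
    "stage_cost \<delta> \<epsilon> Q R Cx dx wx Cu du wu x u \<ge> \<epsilon> * recbar \<delta> Cu du wu u"
    "stage_cost \<delta> \<epsilon> Q R Cx dx wx Cu du wu x u \<ge> qf R u"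
    "stage_cost \<delta> \<epsilon> Q R Cx dx wx Cu du wu x u \<ge> 0"
proof -
  have a: "recbar \<delta> Cx dx wx x \<ge> 0" using recbar_nonneg[OF assms(1,2,4,6)] .
  have b: "recbar \<delta> Cu du wu u \<ge> 0" using recbar_nonneg[OF assms(1,3,5,7)] .
  have a': "\<epsilon> * recbar \<delta> Cx dx wx x \<ge> 0" using a assms(10) by simp
  have b': "\<epsilon> * recbar \<delta> Cu du wu u \<ge> 0" using b assms(10) by simp
  have c: "qf Q x \<ge> 0" using psd_qf[OF assms(8)] .
  have d: "qf R u \<ge> 0" using pd_qf[OF assms(9)] .
  show "stage_cost \<delta> \<epsilon> Q R Cx dx wx Cu du wu x u \<ge> \<epsilon> * recbar \<delta> Cx dx wx x"
    "stage_cost \<delta> \<epsilon> Q R Cx dx wx Cu du wu x u \<ge> \<epsilon> * recbar \<delta> Cu du wu u"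
    "stage_cost \<delta> \<epsilon> Q R Cx dx wx Cu du wu x u \<ge> qf R u"
    "stage_cost \<delta> \<epsilon> Q R Cx dx wx Cu du wu x u \<ge> 0"
    unfolding stage_qf using a' b' c d by linarith+
qed

lemma cost_ge_term:
  assumes "\<And>x u. l x u \<ge> 0" "\<And>z. qf P z \<ge> 0" "k < N"
  shows "cost_N A B N l P U x \<ge> l (traj A B U x k) (U k)" "cost_N A B N l P U x \<ge> 0"
proof -
  have s: "(\<Sum>j<N. l (traj A B U x j) (U j)) \<ge> l (traj A B U x k) (U k)"
    by (rule member_le_sum) (use assms in auto)
  have t: "traj A B U x N \<bullet> (P *v traj A B U x N) \<ge> 0" using assms(2) unfolding qf_def .
  show "cost_N A B N l P U x \<ge> l (traj A B U x k) (U k)" unfolding cost_N_def using s t by linarith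
  show "cost_N A B N l P U x \<ge> 0" unfolding cost_N_def using s t assms(1)[of "traj A B U x k" "U k"] by linarith
qed

lemma cost_nonneg:
  assumes "\<And>x u. l x u \<ge> 0" "\<And>z. qf P z \<ge> 0"
  shows "cost_N A B N l P U x \<ge> 0"
proof -
  have s: "(\<Sum>j<N. l (traj A B U x j) (U j)) \<ge> 0" by (rule sum_nonneg) (use assms in auto)
  have t: "traj A B U x N \<bullet> (P *v traj A B U x N) \<ge> 0" using assms(2) unfolding qf_def .
  show ?thesis unfolding cost_N_def using s t by linarith
qed

lemma recbar_cont: assumes "\<delta> > 0" "continuous_on S f"
  shows "continuous_on S (\<lambda>z. recbar \<delta> C d w (f z))"
  unfolding recbar_def
  by (intro continuous_intros continuous_on_compose2[OF relbar_cont[OF assms(1)]]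
      continuous_on_compose2[OF matrix_vector_mult_linear_continuous_on assms(2)]) auto

lemma cost_cont: assumes "\<delta> > 0"
  shows "continuous_on UNIV (\<lambda>U. cost_N A B N (stage_cost \<delta> \<epsilon> Q R Cx dx wx Cu du wu) P U x)"
proof -
  have tc: "continuous_on UNIV (\<lambda>U. traj A B U x k)" for k by (rule traj_cont)
  have uc: "continuous_on UNIV (\<lambda>U::nat \<Rightarrow> real^'m. U k)" for k by simp
  show ?thesis unfolding cost_N_def stage_qf qf_def[symmetric]
    by (intro continuous_intros qf_cont tc uc recbar_cont[OF assms])
qed

lemma inner_transpose: fixes M :: "real^'n^'m" shows "x \<bullet> (transpose M *v y) = (M *v x) \<bullet> y"
proof -
  have "x \<bullet> (transpose M *v y) = (y v* M) \<bullet> x" by (subst transpose_matrix_vector) (rule inner_commute)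
  also have "\<dots> = y \<bullet> (M *v x)" by (rule dot_lmul_matrix)
  also have "\<dots> = (M *v x) \<bullet> y" by (rule inner_commute)
  finally show ?thesis .
qed

lemma neg_matvec: "(- A) *v x = - (A *v (x::real^'n))"
  by (simp add: matrix_vector_mult_def vec_eq_iff sum_negf)

lemma mat_mul_neg: "(A::real^'n^'m) ** (- B) = - (A ** B)"
  by (simp add: matrix_matrix_mult_def vec_eq_iff sum_negf)

lemma qf_add_mat: "qf (M1 + M2) x = qf M1 x + qf M2 x"
  unfolding qf_def by (simp add: matrix_vector_mult_add_rdistrib inner_add_right)

lemma qf_scaleR_mat: "qf (c *\<^sub>R M) x = c * qf M x"
  unfolding qf_def by (simp add: scaleR_matrix_vector_assoc[symmetric])

lemma qf_sandwich: "qf (transpose M ** P ** M) x = qf P (M *v x)"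
  unfolding qf_def by (simp only: matrix_vector_mul_assoc[symmetric] inner_transpose)

lemma sym_inner: fixes M :: "real^'n^'n" shows "transpose M = M \<Longrightarrow> a \<bullet> (M *v b) = b \<bullet> (M *v a)"
  by (metis inner_transpose inner_commute)

lemma qf_add_sym: "transpose M = M \<Longrightarrow> qf M (a + b) = qf M a + 2 * (b \<bullet> (M *v a)) + qf M b"
  unfolding qf_def using sym_inner[of M a b]
  by (simp add: matrix_vector_right_distrib inner_add_left inner_add_right)

lemma diagm_transpose: "transpose (diagm v) = diagm v"
  unfolding diagm_def transpose_def by (simp add: vec_eq_iff)

lemma qf_diagm: "qf (diagm v) z = (\<Sum>i\<in>UNIV. v $ i * (z $ i)\<^sup>2)"
proof -
  have "(diagm v *v z) $ i = v $ i * z $ i" for i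
  proof -
    have "(diagm v *v z) $ i = (\<Sum>j\<in>UNIV. (if i = j then v $ i else 0) * z $ j)"
      unfolding diagm_def matrix_vector_mult_def by simp
    also have "\<dots> = (\<Sum>j\<in>UNIV. (if i = j then v $ i * z $ j else 0))" by (rule sum.cong) auto
    also have "\<dots> = v $ i * z $ i" by (simp add: sum.delta)
    finally show ?thesis .
  qed
  then show ?thesis unfolding qf_def inner_vec_def by (simp add: power2_eq_square mult.commute mult.left_commute)
qed

lemma qf_Mmat: "qf (Mmat \<delta> C w) y = (1/(2*\<delta>\<^sup>2)) * (\<Sum>i\<in>UNIV. (1 + w $ i) * ((C *v y) $ i)\<^sup>2)"
  unfolding Mmat_def qf_scaleR_mat qf_sandwich qf_diagm by simp

lemma Mmat_sym: "transpose (Mmat \<delta> C w) = Mmat \<delta> C w"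
  unfolding Mmat_def by (simp add: transpose_scalar matrix_transpose_mul diagm_transpose matrix_mul_assoc)

lemma Mmat_nonneg: "\<forall>i. w $ i \<ge> 0 \<Longrightarrow> qf (Mmat \<delta> C w) y \<ge> 0"
  unfolding qf_Mmat by (intro mult_nonneg_nonneg sum_nonneg) auto

lemma transpose_add: "transpose (A + B) = transpose A + transpose B"
  unfolding transpose_def by (simp add: vec_eq_iff)

lemma matrix_inv_works: fixes G :: "real^'n^'n" assumes "invertible G"
  shows "G ** matrix_inv G = mat 1" "matrix_inv G ** G = mat 1"
proof -
  have "\<exists>A'. G ** A' = mat 1 \<and> A' ** G = mat 1" using assms unfolding invertible_def .
  then have "G ** matrix_inv G = mat 1 \<and> matrix_inv G ** G = mat 1"
    unfolding matrix_inv_def by (rule someI_ex)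
  then show "G ** matrix_inv G = mat 1" "matrix_inv G ** G = mat 1" by auto
qed

lemma invertible_from_pos: fixes G :: "real^'n^'n" assumes "\<And>y. y \<noteq> 0 \<Longrightarrow> qf G y > 0"
  shows "invertible G"
proof -
  have "\<forall>y. G *v y = 0 \<longrightarrow> y = 0"
  proof (intro allI impI)
    fix y assume "G *v y = 0"
    then have "qf G y = 0" by (simp add: qf_def)
    then show "y = 0" using assms by force
  qed
  then show ?thesis using matrix_left_invertible_ker invertible_left_inverse by blast
qed

lemma dare_step:
  fixes A :: "real^'n^'n" and B :: "real^'m^'n" and P Qt :: "real^'n^'n" and R Mu :: "real^'m^'m"
  assumes Psym: "transpose P = P" and Ppos: "\<And>z. qf P z \<ge> 0"
    and Rsym: "transpose (R + \<epsilon> *\<^sub>R Mu) = R + \<epsilon> *\<^sub>R Mu" and Rpos: "\<And>z. qf (R + \<epsilon> *\<^sub>R Mu) z \<ge> 0"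
    and Ginv: "invertible (R + transpose B ** P ** B + \<epsilon> *\<^sub>R Mu)"
    and ric: "P = transpose (A + B ** gainK A B R \<epsilon> Mu P) ** P ** (A + B ** gainK A B R \<epsilon> Mu P)
               + transpose (gainK A B R \<epsilon> Mu P) ** (R + \<epsilon> *\<^sub>R Mu) ** gainK A B R \<epsilon> Mu P + Qt"
  shows "qf P x \<le> qf P (A *v x + B *v u) + qf Qt x + qf (R + \<epsilon> *\<^sub>R Mu) u"
proof -
  define K where "K = gainK A B R \<epsilon> Mu P"
  define Rt where "Rt = R + \<epsilon> *\<^sub>R Mu"
  define G where "G = R + transpose B ** P ** B + \<epsilon> *\<^sub>R Mu"
  define v where "v = K *v x"
  define e where "e = u - v"
  have GRt: "G = Rt + transpose B ** P ** B" unfolding G_def Rt_def by (simp add: algebra_simps)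
  have GK: "G *v v = - (transpose B *v (P *v (A *v x)))"
  proof -
    have "G ** K = - (G ** matrix_inv G ** (transpose B ** P ** A))"
      unfolding K_def gainK_def G_def by (simp add: matrix_mul_assoc mat_mul_neg)
    also have "\<dots> = - (transpose B ** P ** A)" using matrix_inv_works(1)[OF Ginv] unfolding G_def by simp
    finally have "G ** K = - (transpose B ** P ** A)" .
    then have "G *v v = (- (transpose B ** P ** A)) *v x" unfolding v_def by (simp add: matrix_vector_mul_assoc)
    then show ?thesis by (simp add: matrix_vector_mul_assoc[symmetric] neg_matvec)
  qed
  have one: "qf P x = qf P (A *v x + B *v v) + qf Rt v + qf Qt x"
  proof -
    have "qf P x = qf (transpose (A + B ** K) ** P ** (A + B ** K)) x + qf (transpose K ** Rt ** K) x + qf Qt x"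
      by (subst ric) (simp add: qf_add_mat K_def Rt_def)
    also have "\<dots> = qf P ((A + B ** K) *v x) + qf Rt v + qf Qt x" by (simp add: qf_sandwich v_def)
    also have "(A + B ** K) *v x = A *v x + B *v v"
      by (simp add: matrix_vector_mult_add_rdistrib matrix_vector_mul_assoc[symmetric] v_def)
    finally show ?thesis .
  qed
  have u: "u = v + e" by (simp add: e_def)
  have cross: "(B *v e) \<bullet> (P *v (A *v x + B *v v)) + e \<bullet> (Rt *v v) = 0"
  proof -
    have "(B *v e) \<bullet> (P *v (A *v x + B *v v)) = e \<bullet> (transpose B *v (P *v (A *v x + B *v v)))"
      by (rule inner_transpose[symmetric])
    also have "\<dots> = e \<bullet> (transpose B *v (P *v (A *v x))) + e \<bullet> ((transpose B ** P ** B) *v v)"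
      by (simp add: matrix_vector_right_distrib inner_add_right matrix_vector_mul_assoc matrix_mul_assoc)
    finally have "(B *v e) \<bullet> (P *v (A *v x + B *v v)) + e \<bullet> (Rt *v v)
        = e \<bullet> (transpose B *v (P *v (A *v x))) + e \<bullet> (G *v v)"
      unfolding GRt by (simp add: matrix_vector_mult_add_rdistrib inner_add_right)
    also have "\<dots> = 0" unfolding GK by simp
    finally show ?thesis .
  qed
  have "qf P (A *v x + B *v u) + qf Rt u
      = qf P (A *v x + B *v v) + qf Rt v + 2 * ((B *v e) \<bullet> (P *v (A *v x + B *v v)) + e \<bullet> (Rt *v v))
        + qf P (B *v e) + qf Rt e"
    unfolding u using qf_add_sym[OF Psym, of "A *v x + B *v v" "B *v e"]
      qf_add_sym[of Rt v e] Rsym unfolding Rt_def[symmetric]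
    by (simp add: matrix_vector_right_distrib algebra_simps)
  also have "\<dots> = qf P (A *v x + B *v v) + qf Rt v + qf P (B *v e) + qf Rt e" using cross by simp
  finally have "qf P (A *v x + B *v u) + qf Rt u \<ge> qf P (A *v x + B *v v) + qf Rt v"
    using Ppos[of "B *v e"] Rpos[of e] unfolding Rt_def[symmetric] by linarith
  then show ?thesis using one unfolding Rt_def by linarith
qed

lemma shiftop_seqs: "shiftop N kf U x \<in> seqs N"
  unfolding shiftop_def seqs_def by auto

lemma phi_mono:
  fixes J :: "(nat \<Rightarrow> real^'m) \<Rightarrow> real^'n \<Rightarrow> real"
  assumes sh: "\<And>U x. U \<in> seqs N \<Longrightarrow> J (shiftop N kf U x) (A *v x + B *v U 0) \<le> J U x"
    and ps: "\<And>U x. U \<in> seqs N \<Longrightarrow> Psio U x \<in> seqs N \<and> J (Psio U x) x \<le> J U x"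
    and U: "U \<in> seqs N"
  shows "Phi A B N kf Psio i U x \<in> seqs N \<and> J (Phi A B N kf Psio i U x) (A *v x + B *v U 0) \<le> J U x"
proof (induction i)
  case 0 then show ?case using sh[OF U] shiftop_seqs by simp
next
  case (Suc i)
  have a: "Phi A B N kf Psio i U x \<in> seqs N" and b: "J (Phi A B N kf Psio i U x) (A *v x + B *v U 0) \<le> J U x"
    using Suc by auto
  have c: "Psio (Phi A B N kf Psio i U x) (A *v x + B *v U 0) \<in> seqs N"
     "J (Psio (Phi A B N kf Psio i U x) (A *v x + B *v U 0)) (A *v x + B *v U 0) \<le> J (Phi A B N kf Psio i U x) (A *v x + B *v U 0)"
    using ps[OF a] by auto
  show ?case using b c by simp
qed

lemma cl_mono:
  fixes J :: "(nat \<Rightarrow> real^'m) \<Rightarrow> real^'n \<Rightarrow> real"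
  assumes sh: "\<And>U x. U \<in> seqs N \<Longrightarrow> J (shiftop N kf U x) (A *v x + B *v U 0) \<le> J U x"
    and ps: "\<And>U x. U \<in> seqs N \<Longrightarrow> Psio U x \<in> seqs N \<and> J (Psio U x) x \<le> J U x"
    and U0: "U0 \<in> seqs N"
  shows "snd (closed_loop A B N kf Psio iT x0 U0 k) \<in> seqs N \<and>
    J (snd (closed_loop A B N kf Psio iT x0 U0 k)) (fst (closed_loop A B N kf Psio iT x0 U0 k)) \<le> J U0 x0"
proof (induction k)
  case 0 then show ?case using U0 by simp
next
  case (Suc k)
  obtain x U where e: "closed_loop A B N kf Psio iT x0 U0 k = (x, U)" by (cases "closed_loop A B N kf Psio iT x0 U0 k")
  have "U \<in> seqs N" "J U x \<le> J U0 x0" using Suc e by auto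
  moreover note phi_mono[OF sh ps \<open>U \<in> seqs N\<close>, of "iT k" x]
  ultimately show ?case using e by auto
qed

lemma dare_iter:
  assumes step: "\<And>x u. qf P x \<le> qf P (A *v x + B *v u) + f x + g u"
  shows "qf P x \<le> (\<Sum>t<k. f (traj A B D x t) + g (D t)) + qf P (traj A B D x k)"
proof (induction k)
  case 0 then show ?case by simp
next
  case (Suc k)
  have "qf P (traj A B D x k) \<le> qf P (traj A B D x (Suc k)) + f (traj A B D x k) + g (D k)"
    using step by simp
  then show ?case using Suc by simp
qed

lemma comp_sq_le: "((v::real^'n) $ i)\<^sup>2 \<le> (norm v)\<^sup>2"
  using power_mono[OF component_le_norm_cart[of v i] abs_ge_zero, of 2] by simp

lemma wsum_bound:
  fixes C :: "real^'n^'q" and w :: "real^'q"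
  assumes "\<forall>i. w $ i \<ge> 0" "\<And>z. norm (C *v z) \<le> K * norm z" "K \<ge> 0"
  shows "(\<Sum>i\<in>UNIV. (1 + w $ i) * ((C *v z) $ i)\<^sup>2) \<le> (\<Sum>i\<in>UNIV. 1 + w $ i) * K\<^sup>2 * (norm z)\<^sup>2"
proof -
  have "(\<Sum>i\<in>UNIV. (1 + w $ i) * ((C *v z) $ i)\<^sup>2) \<le> (\<Sum>i\<in>UNIV. (1 + w $ i) * (K\<^sup>2 * (norm z)\<^sup>2))"
  proof (rule sum_mono)
    fix i
    have "((C *v z) $ i)\<^sup>2 \<le> (norm (C *v z))\<^sup>2" by (rule comp_sq_le)
    also have "\<dots> \<le> (K * norm z)\<^sup>2" using assms(2)[of z] by (intro power_mono) auto
    finally show "(1 + w $ i) * ((C *v z) $ i)\<^sup>2 \<le> (1 + w $ i) * (K\<^sup>2 * (norm z)\<^sup>2)"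
      using assms(1) by (intro mult_left_mono) (auto simp: power_mult_distrib)
  qed
  then show ?thesis by (simp add: sum_distrib_right mult.assoc)
qed

lemma Kinf_lin: "c > 0 \<Longrightarrow> Kinf (\<lambda>t. c * t)"
  unfolding Kinf_def
  by (auto intro!: continuous_intros strict_mono_onI filterlim_tendsto_pos_mult_at_top[OF tendsto_const] filterlim_ident)

lemma feasible_scaled:
  fixes A :: "real^'n^'n" and B :: "real^'m^'n" and Cx :: "real^'n^'qx" and Cu :: "real^'m^'qu"
  assumes F: "(1 + \<eta>) *\<^sub>R x \<in> feasible_set A B Cx dx Cu du N" and eta: "\<eta> > 0"
    and Xm: "\<And>z. z \<in> polyh Cx dx \<Longrightarrow> norm z \<le> Xmax"
    and Um: "\<And>z. z \<in> polyh Cu du \<Longrightarrow> norm z \<le> Umax"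
    and dpos: "\<forall>i. dx $ i > 0" "\<forall>j. du $ j > 0"
  shows "\<exists>V\<in>seqs N. (\<forall>k<N. (\<forall>i. dx $ i - (Cx *v traj A B V x k) $ i \<ge> (\<eta>/(1+\<eta>)) * dx $ i)
     \<and> norm (traj A B V x k) \<le> Xmax
     \<and> (\<forall>j. du $ j - (Cu *v V k) $ j \<ge> (\<eta>/(1+\<eta>)) * du $ j) \<and> norm (V k) \<le> Umax)
     \<and> traj A B V x N = 0"
proof -
  obtain U where U: "\<forall>k<N. U k \<in> polyh Cu du" "\<forall>k<N. traj A B U ((1 + \<eta>) *\<^sub>R x) k \<in> polyh Cx dx"
     "traj A B U ((1 + \<eta>) *\<^sub>R x) N = 0"
    using F unfolding feasible_set_def by blast
  define c where "c = 1/(1+\<eta>)"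
  have c: "c > 0" "c \<le> 1" "1 - c = \<eta>/(1+\<eta>)" using eta by (auto simp: c_def field_simps)
  define V where "V k = (if k < N then c *\<^sub>R U k else 0)" for k
  have Vs: "V \<in> seqs N" by (simp add: V_def seqs_def)
  have cx: "c *\<^sub>R ((1 + \<eta>) *\<^sub>R x) = x" using eta by (simp add: c_def)
  have tr: "traj A B V x k = c *\<^sub>R traj A B U ((1 + \<eta>) *\<^sub>R x) k" if "k \<le> N" for k
  proof -
    have "traj A B V x k = traj A B (\<lambda>j. c *\<^sub>R U j) (c *\<^sub>R ((1 + \<eta>) *\<^sub>R x)) k"
      unfolding cx by (rule traj_cong) (use that in \<open>auto simp: V_def\<close>)
    also have "\<dots> = c *\<^sub>R traj A B U ((1 + \<eta>) *\<^sub>R x) k" by (rule traj_scale)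
    finally show ?thesis .
  qed
  have marg: "d - (M *v (c *\<^sub>R z)) $ i \<ge> (\<eta>/(1+\<eta>)) * d" if "(M *v z) $ i \<le> d" "d > 0" for M :: "real^'a^'b" and z d i
  proof -
    have "(M *v (c *\<^sub>R z)) $ i = c * (M *v z) $ i" by (simp add: matrix_vector_mult_scaleR)
    also have "\<dots> \<le> c * d" using that c by (intro mult_left_mono) auto
    finally have a: "(M *v (c *\<^sub>R z)) $ i \<le> c * d" .
    have "(\<eta>/(1+\<eta>)) * d = d - c * d" using c(3) by (simp add: algebra_simps flip: c(3))
    then show ?thesis using a by linarith
  qed
  have nrm: "norm (c *\<^sub>R z) \<le> norm z" for z :: "real^'a" using c by (simp add: mult_left_le_one_le)
  have "\<forall>k<N. (\<forall>i. dx $ i - (Cx *v traj A B V x k) $ i \<ge> (\<eta>/(1+\<eta>)) * dx $ i)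
     \<and> norm (traj A B V x k) \<le> Xmax
     \<and> (\<forall>j. du $ j - (Cu *v V k) $ j \<ge> (\<eta>/(1+\<eta>)) * du $ j) \<and> norm (V k) \<le> Umax"
  proof (intro allI impI)
    fix k assume k: "k < N"
    have X: "traj A B U ((1 + \<eta>) *\<^sub>R x) k \<in> polyh Cx dx" using U(2) k by blast
    have Uk: "U k \<in> polyh Cu du" using U(1) k by blast
    have 1: "\<forall>i. dx $ i - (Cx *v traj A B V x k) $ i \<ge> (\<eta>/(1+\<eta>)) * dx $ i"
      using X dpos(1) marg unfolding tr[OF less_imp_le[OF k]] polyh_def by blast
    have 2: "norm (traj A B V x k) \<le> Xmax" unfolding tr[OF less_imp_le[OF k]] using nrm Xm[OF X] order_trans by blast
    have 3: "\<forall>j. du $ j - (Cu *v V k) $ j \<ge> (\<eta>/(1+\<eta>)) * du $ j"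
    proof
      fix j
      have "(Cu *v U k) $ j \<le> du $ j" using Uk unfolding polyh_def by blast
      then show "du $ j - (Cu *v V k) $ j \<ge> (\<eta>/(1+\<eta>)) * du $ j"
        using marg[of Cu "U k" j "du $ j"] dpos(2) k unfolding V_def by simp
    qed
    have 4: "norm (V k) \<le> Umax" using nrm Um[OF Uk] k unfolding V_def by (auto intro: order_trans)
    show "(\<forall>i. dx $ i - (Cx *v traj A B V x k) $ i \<ge> (\<eta>/(1+\<eta>)) * dx $ i)
     \<and> norm (traj A B V x k) \<le> Xmax
     \<and> (\<forall>j. du $ j - (Cu *v V k) $ j \<ge> (\<eta>/(1+\<eta>)) * du $ j) \<and> norm (V k) \<le> Umax"
      using 1 2 3 4 by blast
  qed
  moreover have "traj A B V x N = 0" using tr[of N] U(3) by simp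
  ultimately show ?thesis using Vs by blast
qed

lemma traj_zero: "traj A B (\<lambda>_. 0) 0 k = 0"
  by (induction k) auto

lemma drive:
  fixes A :: "real^'n^'n" and B :: "real^'m^'n" and Cx :: "real^'n^'qx" and Cu :: "real^'m^'qu"
  assumes ball: "\<And>z. dist p z < e \<Longrightarrow> z \<in> feasible_set A B Cx dx Cu du N" and e: "e > 0"
    and Xm: "\<And>z. z \<in> polyh Cx dx \<Longrightarrow> norm z \<le> Xmax"
    and Um: "\<And>z. z \<in> polyh Cu du \<Longrightarrow> norm z \<le> Umax"
    and X0: "Xmax \<ge> 0" and U0: "Umax \<ge> 0"
  shows "\<exists>D. traj A B D y N = 0 \<and> (\<forall>k<N. norm (D k) \<le> (4*Umax/e) * norm y
          \<and> norm (traj A B D y k) \<le> (4*Xmax/e) * norm y)"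
proof (cases "y = 0")
  case True
  then show ?thesis using X0 U0 e by (intro exI[of _ "\<lambda>_. 0"]) (simp add: traj_zero)
next
  case False
  define s where "s = (e/2) / norm y"
  have s: "s > 0" using e False by (simp add: s_def)
  define y' where "y' = p + s *\<^sub>R y"
  have "dist p y' = e/2" using False e by (simp add: y'_def dist_norm s_def)
  then have "y' \<in> feasible_set A B Cx dx Cu du N" using ball e by simp
  then obtain U1 where U1: "\<forall>k<N. U1 k \<in> polyh Cu du" "\<forall>k<N. traj A B U1 y' k \<in> polyh Cx dx" "traj A B U1 y' N = 0"
    unfolding feasible_set_def by blast
  have "p \<in> feasible_set A B Cx dx Cu du N" using ball e by simp
  then obtain U2 where U2: "\<forall>k<N. U2 k \<in> polyh Cu du" "\<forall>k<N. traj A B U2 p k \<in> polyh Cx dx" "traj A B U2 p N = 0"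
    unfolding feasible_set_def by blast
  define D where "D k = (1/s) *\<^sub>R (U1 k - U2 k)" for k
  have yy: "(1/s) *\<^sub>R (y' - p) = y" using s by (simp add: y'_def)
  have tr: "traj A B D y k = (1/s) *\<^sub>R (traj A B U1 y' k - traj A B U2 p k)" for k
  proof -
    have "traj A B D y k = traj A B (\<lambda>j. (1/s) *\<^sub>R (\<lambda>j. U1 j - U2 j) j) ((1/s) *\<^sub>R (y' - p)) k"
      unfolding yy D_def by simp
    also have "\<dots> = (1/s) *\<^sub>R traj A B (\<lambda>j. U1 j - U2 j) (y' - p) k" by (rule traj_scale)
    also have "\<dots> = (1/s) *\<^sub>R (traj A B U1 y' k - traj A B U2 p k)" by (simp add: traj_diff)
    finally show ?thesis .
  qed
  have isy: "1/s = (2/e) * norm y" using e by (simp add: s_def)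
  have b2: "norm (a - b) \<le> 2 * M" if "norm a \<le> M" "norm b \<le> M" for a b :: "real^'z" and M
    using norm_triangle_ineq4[of a b] that by linarith
  have "\<forall>k<N. norm (D k) \<le> (4*Umax/e) * norm y \<and> norm (traj A B D y k) \<le> (4*Xmax/e) * norm y"
  proof (intro allI impI)
    fix k assume k: "k < N"
    have "norm (U1 k - U2 k) \<le> 2 * Umax" using b2 Um U1(1) U2(1) k by blast
    then have "norm (D k) \<le> (1/s) * (2 * Umax)" using s unfolding D_def by (simp add: divide_right_mono)
    also have "\<dots> = (4*Umax/e) * norm y" unfolding isy by simp
    finally have 1: "norm (D k) \<le> (4*Umax/e) * norm y" .
    have "norm (traj A B U1 y' k - traj A B U2 p k) \<le> 2 * Xmax" using b2 Xm U1(2) U2(2) k by blast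
    then have "norm (traj A B D y k) \<le> (1/s) * (2 * Xmax)" using s unfolding tr by (simp add: divide_right_mono)
    also have "\<dots> = (4*Xmax/e) * norm y" unfolding isy by simp
    finally show "norm (D k) \<le> (4*Umax/e) * norm y \<and> norm (traj A B D y k) \<le> (4*Xmax/e) * norm y"
      using 1 by simp
  qed
  moreover have "traj A B D y N = 0" unfolding tr using U1(3) U2(3) by simp
  ultimately show ?thesis by blast
qed

lemma sum_le_const: "(\<And>k. k < N \<Longrightarrow> f k \<le> c) \<Longrightarrow> (\<Sum>k<N. f k) \<le> real N * c"
  using sum_mono[of "{..<N}" f "\<lambda>_. c"] by simp

lemma Pbound:
  fixes A :: "real^'n^'n" and B :: "real^'m^'n" and Cx :: "real^'n^'qx" and Cu :: "real^'m^'qu"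
  assumes step: "\<And>x u. qf P x \<le> qf P (A *v x + B *v u) + qf Qt x + qf Rt u"
    and qt: "\<And>z. qf Qt z \<le> a * (norm z)\<^sup>2" and rt: "\<And>z. qf Rt z \<le> b * (norm z)\<^sup>2" and ab: "a \<ge> 0" "b \<ge> 0"
    and ball: "\<And>z. dist p z < e \<Longrightarrow> z \<in> feasible_set A B Cx dx Cu du N" and e: "e > 0"
    and Xm: "\<And>z. z \<in> polyh Cx dx \<Longrightarrow> norm z \<le> Xmax"
    and Um: "\<And>z. z \<in> polyh Cu du \<Longrightarrow> norm z \<le> Umax"
    and X0: "Xmax \<ge> 0" and U0: "Umax \<ge> 0"
  shows "qf P y \<le> real N * (a * (4*Xmax/e)\<^sup>2 + b * (4*Umax/e)\<^sup>2) * (norm y)\<^sup>2"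
proof -
  obtain D where D: "traj A B D y N = 0" "\<And>k. k<N \<Longrightarrow> norm (D k) \<le> (4*Umax/e) * norm y
          \<and> norm (traj A B D y k) \<le> (4*Xmax/e) * norm y"
  proof -
    have "\<exists>D. traj A B D y N = 0 \<and> (\<forall>k<N. norm (D k) \<le> (4*Umax/e) * norm y
          \<and> norm (traj A B D y k) \<le> (4*Xmax/e) * norm y)"
      by (rule drive[where p=p]) (use ball e Xm Um X0 U0 in auto)
    then show ?thesis using that by blast
  qed
  have "qf P y \<le> (\<Sum>t<N. qf Qt (traj A B D y t) + qf Rt (D t)) + qf P (traj A B D y N)"
    by (rule dare_iter) (rule step)
  also have "qf P (traj A B D y N) = 0" using D(1) by (simp add: qf_def)
  also have "(\<Sum>t<N. qf Qt (traj A B D y t) + qf Rt (D t)) \<le> real N * (a * (4*Xmax/e)\<^sup>2 + b * (4*Umax/e)\<^sup>2) * (norm y)\<^sup>2"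
  proof -
    have "qf Qt (traj A B D y t) + qf Rt (D t) \<le> (a * (4*Xmax/e)\<^sup>2 + b * (4*Umax/e)\<^sup>2) * (norm y)\<^sup>2" if t: "t < N" for t
    proof -
      have "(norm (traj A B D y t))\<^sup>2 \<le> ((4*Xmax/e) * norm y)\<^sup>2" using D(2)[OF t] by (intro power_mono) auto
      then have 1: "qf Qt (traj A B D y t) \<le> a * ((4*Xmax/e) * norm y)\<^sup>2"
        using qt[of "traj A B D y t"] ab(1) by (meson mult_left_mono order_trans)
      have "(norm (D t))\<^sup>2 \<le> ((4*Umax/e) * norm y)\<^sup>2" using D(2)[OF t] by (intro power_mono) auto
      then have 2: "qf Rt (D t) \<le> b * ((4*Umax/e) * norm y)\<^sup>2"
        using rt[of "D t"] ab(2) by (meson mult_left_mono order_trans)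
      have e1: "a * ((4*Xmax/e) * norm y)\<^sup>2 = a * (4*Xmax/e)\<^sup>2 * (norm y)\<^sup>2" by (simp only: power_mult_distrib mult.assoc)
      have e2: "b * ((4*Umax/e) * norm y)\<^sup>2 = b * (4*Umax/e)\<^sup>2 * (norm y)\<^sup>2" by (simp only: power_mult_distrib mult.assoc)
      have e3: "(a * (4*Xmax/e)\<^sup>2 + b * (4*Umax/e)\<^sup>2) * (norm y)\<^sup>2 = a * (4*Xmax/e)\<^sup>2 * (norm y)\<^sup>2 + b * (4*Umax/e)\<^sup>2 * (norm y)\<^sup>2"
        by (simp add: distrib_right)
      show ?thesis using 1 2 e1 e2 e3 by linarith
    qed
    then show ?thesis using sum_le_const[of N] by (simp add: mult.assoc)
  qed
  finally show ?thesis by simp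
qed

lemma RX_bound:
  fixes C :: "real^'n^'q"
  assumes "\<forall>i. w $ i \<ge> 0" "\<And>z. norm (C *v z) \<le> K * norm z" "K \<ge> 0" "\<delta> > 0"
  shows "RX \<delta> C w h \<le> 2 * (\<Sum>i\<in>UNIV. 1 + w $ i) * K\<^sup>2 * (norm h)\<^sup>2 / \<delta>\<^sup>2"
proof -
  have "RX \<delta> C w h = (2/\<delta>\<^sup>2) * (\<Sum>i\<in>UNIV. (1 + w $ i) * ((C *v h) $ i)\<^sup>2)"
    unfolding RX_def by (simp add: sum_distrib_left field_simps)
  also have "\<dots> \<le> (2/\<delta>\<^sup>2) * ((\<Sum>i\<in>UNIV. 1 + w $ i) * K\<^sup>2 * (norm h)\<^sup>2)"
    using wsum_bound[OF assms(1-3)] assms(4) by (intro mult_left_mono) auto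
  finally show ?thesis by simp
qed

lemma sq_le: "(a::real) \<ge> 0 \<Longrightarrow> a \<le> b \<Longrightarrow> a\<^sup>2 \<le> b\<^sup>2" by (intro power_mono) auto

lemma quad_bound:
  fixes A :: "real^'n^'n" and B :: "real^'m^'n" and Cx :: "real^'n^'qx" and Cu :: "real^'m^'qu"
  assumes L: "\<And>U k. k \<le> N \<Longrightarrow> norm (traj A B U 0 k) \<le> L * seq_norm N U" "L \<ge> 0"
    and KQ: "\<And>z. \<bar>qf Q z\<bar> \<le> KQ * (norm z)\<^sup>2" and KR: "\<And>z. \<bar>qf R z\<bar> \<le> KR * (norm z)\<^sup>2"
    and KP: "\<And>z. qf P z \<le> KP * (norm z)\<^sup>2" "KP \<ge> 0"
    and KCx: "\<And>z. norm (Cx *v z) \<le> KCx * norm z" "KCx \<ge> 0"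
    and KCu: "\<And>z. norm (Cu *v z) \<le> KCu * norm z" "KCu \<ge> 0"
    and w: "\<forall>i. wx $ i \<ge> 0" "\<forall>j. wu $ j \<ge> 0" and eps: "\<epsilon> \<ge> 0" and d: "\<delta> > 0"
  shows "(\<Sum>k<N. 2 * qf Q (traj A B D 0 k) + 2 * qf R (D k) + \<epsilon> * RX \<delta> Cx wx (traj A B D 0 k)
           + \<epsilon> * RX \<delta> Cu wu (D k)) + 2 * qf P (traj A B D 0 N)
     \<le> (real N * (2*KQ*L\<^sup>2 + 2*KR + \<epsilon> * (2 * (\<Sum>i\<in>UNIV. 1 + wx $ i) * KCx\<^sup>2 * L\<^sup>2 / \<delta>\<^sup>2)
          + \<epsilon> * (2 * (\<Sum>i\<in>UNIV. 1 + wu $ i) * KCu\<^sup>2 / \<delta>\<^sup>2)) + 2 * KP * L\<^sup>2) * (seq_norm N D)\<^sup>2"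
proof -
  define S where "S = seq_norm N D"
  have S0: "S \<ge> 0" unfolding S_def by (rule seq_norm_nonneg)
  have KQ0: "KQ \<ge> 0" using KQ[of "axis undefined 1"] by (metis abs_ge_zero norm_axis_1 order_trans power_one mult.right_neutral)
  have KR0: "KR \<ge> 0" using KR[of "axis undefined 1"] by (metis abs_ge_zero norm_axis_1 order_trans power_one mult.right_neutral)
  define SWx where "SWx = (\<Sum>i\<in>UNIV. 1 + wx $ i)"
  define SWu where "SWu = (\<Sum>i\<in>UNIV. 1 + wu $ i)"
  have trm: "2 * qf Q (traj A B D 0 k) + 2 * qf R (D k) + \<epsilon> * RX \<delta> Cx wx (traj A B D 0 k) + \<epsilon> * RX \<delta> Cu wu (D k)
     \<le> (2*KQ*L\<^sup>2 + 2*KR + \<epsilon> * (2 * SWx * KCx\<^sup>2 * L\<^sup>2 / \<delta>\<^sup>2) + \<epsilon> * (2 * SWu * KCu\<^sup>2 / \<delta>\<^sup>2)) * S\<^sup>2"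
    if k: "k < N" for k
  proof -
    have h2: "(norm (traj A B D 0 k))\<^sup>2 \<le> L\<^sup>2 * S\<^sup>2"
      using sq_le[OF norm_ge_zero L(1)[of k D]] k by (simp add: S_def power_mult_distrib)
    have d2: "(norm (D k))\<^sup>2 \<le> S\<^sup>2" using sq_le[OF norm_ge_zero seq_norm_ge[OF k, of D]] by (simp add: S_def)
    have 1: "qf Q (traj A B D 0 k) \<le> KQ * (L\<^sup>2 * S\<^sup>2)"
      using KQ[of "traj A B D 0 k"] mult_left_mono[OF h2 KQ0] by linarith
    have 2: "qf R (D k) \<le> KR * S\<^sup>2" using KR[of "D k"] mult_left_mono[OF d2 KR0] by linarith
    have SWx0: "SWx \<ge> 0" unfolding SWx_def using w(1) by (intro sum_nonneg) (simp add: add_nonneg_nonneg)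
    have SWu0: "SWu \<ge> 0" unfolding SWu_def using w(2) by (intro sum_nonneg) (simp add: add_nonneg_nonneg)
    have "RX \<delta> Cx wx (traj A B D 0 k) \<le> 2 * SWx * KCx\<^sup>2 * (norm (traj A B D 0 k))\<^sup>2 / \<delta>\<^sup>2"
      unfolding SWx_def by (rule RX_bound[OF w(1) KCx d])
    also have "\<dots> \<le> 2 * SWx * KCx\<^sup>2 * (L\<^sup>2 * S\<^sup>2) / \<delta>\<^sup>2"
      using h2 SWx0 by (intro divide_right_mono mult_left_mono) auto
    finally have 3: "\<epsilon> * RX \<delta> Cx wx (traj A B D 0 k) \<le> \<epsilon> * (2 * SWx * KCx\<^sup>2 * (L\<^sup>2 * S\<^sup>2) / \<delta>\<^sup>2)"
      using eps by (rule mult_left_mono)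
    have "RX \<delta> Cu wu (D k) \<le> 2 * SWu * KCu\<^sup>2 * (norm (D k))\<^sup>2 / \<delta>\<^sup>2"
      unfolding SWu_def by (rule RX_bound[OF w(2) KCu d])
    also have "\<dots> \<le> 2 * SWu * KCu\<^sup>2 * S\<^sup>2 / \<delta>\<^sup>2"
      using d2 SWu0 by (intro divide_right_mono mult_left_mono) auto
    finally have 4: "\<epsilon> * RX \<delta> Cu wu (D k) \<le> \<epsilon> * (2 * SWu * KCu\<^sup>2 * S\<^sup>2 / \<delta>\<^sup>2)"
      using eps by (rule mult_left_mono)
    have eq: "(2*KQ*L\<^sup>2 + 2*KR + \<epsilon> * (2 * SWx * KCx\<^sup>2 * L\<^sup>2 / \<delta>\<^sup>2) + \<epsilon> * (2 * SWu * KCu\<^sup>2 / \<delta>\<^sup>2)) * S\<^sup>2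
      = 2 * (KQ * (L\<^sup>2 * S\<^sup>2)) + 2 * (KR * S\<^sup>2) + \<epsilon> * (2 * SWx * KCx\<^sup>2 * (L\<^sup>2 * S\<^sup>2) / \<delta>\<^sup>2)
        + \<epsilon> * (2 * SWu * KCu\<^sup>2 * S\<^sup>2 / \<delta>\<^sup>2)"
      by (simp add: algebra_simps)
    show ?thesis unfolding eq using 1 2 3 4 by linarith
  qed
  have s: "(\<Sum>k<N. 2 * qf Q (traj A B D 0 k) + 2 * qf R (D k) + \<epsilon> * RX \<delta> Cx wx (traj A B D 0 k)
           + \<epsilon> * RX \<delta> Cu wu (D k))
     \<le> real N * ((2*KQ*L\<^sup>2 + 2*KR + \<epsilon> * (2 * SWx * KCx\<^sup>2 * L\<^sup>2 / \<delta>\<^sup>2) + \<epsilon> * (2 * SWu * KCu\<^sup>2 / \<delta>\<^sup>2)) * S\<^sup>2)"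
    by (rule sum_le_const) (rule trm)
  have hN: "(norm (traj A B D 0 N))\<^sup>2 \<le> L\<^sup>2 * S\<^sup>2"
    using sq_le[OF norm_ge_zero L(1)[of N D]] by (simp add: S_def power_mult_distrib)
  have t: "2 * qf P (traj A B D 0 N) \<le> 2 * KP * L\<^sup>2 * S\<^sup>2"
    using KP(1)[of "traj A B D 0 N"] mult_left_mono[OF hN KP(2)] by (simp add: mult.assoc)
  show ?thesis using s t unfolding S_def[symmetric] SWx_def[symmetric] SWu_def[symmetric]
    by (simp add: algebra_simps)
qed

lemma lin_g: "(a::real) \<ge> 0 \<Longrightarrow> b \<ge> 0 \<Longrightarrow> g \<ge> 1 \<Longrightarrow> a + b * g \<le> (a + b) * g"
  by (simp add: algebra_simps) (metis mult_left_mono mult.right_neutral)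

theorem theorem3:
  fixes A :: "real^'n^'n" and B :: "real^'m^'n"
    and Cx :: "real^'n^'qx" and dx :: "real^'qx" and wx :: "real^'qx"
    and Cu :: "real^'m^'qu" and du :: "real^'qu" and wu :: "real^'qu"
    and N :: nat and \<epsilon> :: real and Q :: "real^'n^'n" and R :: "real^'m^'m"
    and P :: "real \<Rightarrow> real^'n^'n"
    and kf :: "real \<Rightarrow> (nat \<Rightarrow> real^'m) \<Rightarrow> real^'n \<Rightarrow> real^'m"
    and Psio :: "real \<Rightarrow> (nat \<Rightarrow> real^'m) \<Rightarrow> real^'n \<Rightarrow> (nat \<Rightarrow> real^'m)"
    and \<gamma> :: "real \<Rightarrow> (nat \<Rightarrow> real^'m) \<Rightarrow> real^'n \<Rightarrow> real"
  assumes N_pos: "N \<ge> 1"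
    and Xcomp: "compact (polyh Cx dx)" and Ucomp: "compact (polyh Cu du)"
    and dx_pos: "\<forall>i. dx $ i > 0" and du_pos: "\<forall>i. du $ i > 0"
    and eps_pos: "\<epsilon> > 0" and Q_psd: "psd Q" and R_pd: "pd R"
    and wx_nonneg: "\<forall>i. wx $ i \<ge> 0" and wu_nonneg: "\<forall>i. wu $ i \<ge> 0"
    and wx_center: "transpose Cx *v (\<chi> i. (1 + wx $ i) / dx $ i) = 0"
    and wu_center: "transpose Cu *v (\<chi> i. (1 + wu $ i) / du $ i) = 0"
    and ctrb: "controllable A B"
    \<comment> \<open>for each admissible relaxation parameter: terminal weight P\<close>
    and P_ric: "\<And>\<delta>. 0 < \<delta> \<Longrightarrow> (\<forall>i. \<delta> \<le> dx $ i) \<Longrightarrow> (\<forall>j. \<delta> \<le> du $ j) \<Longrightarrow>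
        pd (P \<delta>) \<and>
        (let K = gainK A B R \<epsilon> (Mmat \<delta> Cu wu) (P \<delta>) in
          P \<delta> = transpose (A + B ** K) ** P \<delta> ** (A + B ** K)
                + transpose K ** (R + \<epsilon> *\<^sub>R Mmat \<delta> Cu wu) ** K + Q + \<epsilon> *\<^sub>R Mmat \<delta> Cx wx)"
    \<comment> \<open>terminal control law k_f\<close>
    and kf_zero: "\<And>\<delta>. 0 < \<delta> \<Longrightarrow> (\<forall>i. \<delta> \<le> dx $ i) \<Longrightarrow> (\<forall>j. \<delta> \<le> du $ j) \<Longrightarrow>
        kf \<delta> (\<lambda>_. 0) 0 = 0"
    and kf_dec: "\<And>\<delta> U x. 0 < \<delta> \<Longrightarrow> (\<forall>i. \<delta> \<le> dx $ i) \<Longrightarrow> (\<forall>j. \<delta> \<le> du $ j) \<Longrightarrow>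
        U \<in> seqs N \<Longrightarrow>
        cost_N A B N (stage_cost \<delta> \<epsilon> Q R Cx dx wx Cu du wu) (P \<delta>) (shiftop N (kf \<delta>) U x) (A *v x + B *v U 0)
        - cost_N A B N (stage_cost \<delta> \<epsilon> Q R Cx dx wx Cu du wu) (P \<delta>) U x
        \<le> - stage_cost \<delta> \<epsilon> Q R Cx dx wx Cu du wu x (U 0)"
    \<comment> \<open>optimizer update operator\<close>
    and Psio_seqs: "\<And>\<delta> U x. 0 < \<delta> \<Longrightarrow> (\<forall>i. \<delta> \<le> dx $ i) \<Longrightarrow> (\<forall>j. \<delta> \<le> du $ j) \<Longrightarrow>
        U \<in> seqs N \<Longrightarrow> Psio \<delta> U x \<in> seqs N"
    and Psio_dec: "\<And>\<delta> U x. 0 < \<delta> \<Longrightarrow> (\<forall>i. \<delta> \<le> dx $ i) \<Longrightarrow> (\<forall>j. \<delta> \<le> du $ j) \<Longrightarrow>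
        U \<in> seqs N \<Longrightarrow>
        cost_N A B N (stage_cost \<delta> \<epsilon> Q R Cx dx wx Cu du wu) (P \<delta>) (Psio \<delta> U x) x
        - cost_N A B N (stage_cost \<delta> \<epsilon> Q R Cx dx wx Cu du wu) (P \<delta>) U x \<le> - \<gamma> \<delta> U x"
    and gamma_nonneg: "\<And>\<delta> U x. 0 < \<delta> \<Longrightarrow> (\<forall>i. \<delta> \<le> dx $ i) \<Longrightarrow> (\<forall>j. \<delta> \<le> du $ j) \<Longrightarrow>
        U \<in> seqs N \<Longrightarrow> \<gamma> \<delta> U x \<ge> 0"
    and gamma_zero: "\<And>\<delta> U x. 0 < \<delta> \<Longrightarrow> (\<forall>i. \<delta> \<le> dx $ i) \<Longrightarrow> (\<forall>j. \<delta> \<le> du $ j) \<Longrightarrow>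
        U \<in> seqs N \<Longrightarrow>
        (\<gamma> \<delta> U x = 0 \<longleftrightarrow>
          grad_zero N (\<lambda>V. cost_N A B N (stage_cost \<delta> \<epsilon> Q R Cx dx wx Cu du wu) (P \<delta>) V x) U)"
  shows "\<forall>X0 zx zu. compact X0 \<and> X0 \<subseteq> interior (feasible_set A B Cx dx Cu du N)
           \<and> (\<forall>i. zx $ i \<ge> (0::real)) \<and> (\<forall>j. zu $ j \<ge> (0::real)) \<longrightarrow>
         (\<exists>\<delta>0 > 0. \<exists>\<mu>. Kinf \<mu> \<and>
            (\<forall>\<delta>. 0 < \<delta> \<and> \<delta> \<le> \<delta>0 \<longrightarrow>
              (\<forall>x0\<in>X0. \<forall>U0\<in>seqs N.
                 seq_norm N (\<lambda>k. U0 k -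
                   (THE U. U \<in> seqs N \<and> (\<forall>V\<in>seqs N.
                      cost_N A B N (stage_cost \<delta> \<epsilon> Q R Cx dx wx Cu du wu) (P \<delta>) U x0
                      \<le> cost_N A B N (stage_cost \<delta> \<epsilon> Q R Cx dx wx Cu du wu) (P \<delta>) V x0)) k)
                 \<le> \<mu> \<delta> \<longrightarrow>
                 (\<forall>iT k. let (x, U) = closed_loop A B N (kf \<delta>) (Psio \<delta>) iT x0 U0 k in
                    (\<forall>i. (Cx *v x) $ i \<le> dx $ i + zx $ i) \<and>
                    (\<forall>j. (Cu *v U 0) $ j \<le> du $ j + zu $ j)))))"
  proof (intro allI impI)
  fix X0 :: "(real^'n) set" and zx :: "real^'qx" and zu :: "real^'qu"
  assume H: "compact X0 \<and> X0 \<subseteq> interior (feasible_set A B Cx dx Cu du N)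
           \<and> (\<forall>i. zx $ i \<ge> (0::real)) \<and> (\<forall>j. zu $ j \<ge> (0::real))"
  have cX0: "compact X0" and sub: "X0 \<subseteq> interior (feasible_set A B Cx dx Cu du N)"
    and zx: "\<forall>i. zx $ i \<ge> 0" and zu: "\<forall>j. zu $ j \<ge> 0" using H by auto
  define J where "J \<delta> U x = cost_N A B N (stage_cost \<delta> \<epsilon> Q R Cx dx wx Cu du wu) (P \<delta>) U x" for \<delta> U x
  define goal where "goal \<delta> x0 U0 \<longleftrightarrow> (\<forall>iT k. let (x, U) = closed_loop A B N (kf \<delta>) (Psio \<delta>) iT x0 U0 k in
                    (\<forall>i. (Cx *v x) $ i \<le> dx $ i + zx $ i) \<and>
                    (\<forall>j. (Cu *v U 0) $ j \<le> du $ j + zu $ j))" for \<delta> x0 U0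
  show "\<exists>\<delta>0 > 0. \<exists>\<mu>. Kinf \<mu> \<and>
            (\<forall>\<delta>. 0 < \<delta> \<and> \<delta> \<le> \<delta>0 \<longrightarrow>
              (\<forall>x0\<in>X0. \<forall>U0\<in>seqs N.
                 seq_norm N (\<lambda>k. U0 k -
                   (THE U. U \<in> seqs N \<and> (\<forall>V\<in>seqs N.
                      cost_N A B N (stage_cost \<delta> \<epsilon> Q R Cx dx wx Cu du wu) (P \<delta>) U x0
                      \<le> cost_N A B N (stage_cost \<delta> \<epsilon> Q R Cx dx wx Cu du wu) (P \<delta>) V x0)) k)
                 \<le> \<mu> \<delta> \<longrightarrow>
                 (\<forall>iT k. let (x, U) = closed_loop A B N (kf \<delta>) (Psio \<delta>) iT x0 U0 k in
                    (\<forall>i. (Cx *v x) $ i \<le> dx $ i + zx $ i) \<and>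
                    (\<forall>j. (Cu *v U 0) $ j \<le> du $ j + zu $ j))))"
  proof (cases "X0 = {}")
    case True
    show ?thesis using True Kinf_lin[of 1] by (intro exI[of _ 1]) auto
  next
    case False
    then obtain p where p: "p \<in> X0" by blast
    have Xb0: "bounded (polyh Cx dx)" using Xcomp by (rule compact_imp_bounded)
    obtain Xmax where Xmax: "Xmax > 0" "\<And>z. z \<in> polyh Cx dx \<Longrightarrow> norm z \<le> Xmax"
      using Xb0 unfolding bounded_pos by blast
    have Ub0: "bounded (polyh Cu du)" using Ucomp by (rule compact_imp_bounded)
    obtain Umax where Umax: "Umax > 0" "\<And>z. z \<in> polyh Cu du \<Longrightarrow> norm z \<le> Umax"
      using Ub0 unfolding bounded_pos by blast
    obtain KQ where KQ: "KQ \<ge> 0" "\<And>z. \<bar>qf Q z\<bar> \<le> KQ * (norm z)\<^sup>2" using qf_bound by blast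
    obtain KR where KR: "KR \<ge> 0" "\<And>z. \<bar>qf R z\<bar> \<le> KR * (norm z)\<^sup>2" using qf_bound by blast
    obtain KCx where KCx: "KCx \<ge> 0" "\<And>z. norm (Cx *v z) \<le> KCx * norm z" using matvec_bound by blast
    obtain KCu where KCu: "KCu \<ge> 0" "\<And>z. norm (Cu *v z) \<le> KCu * norm z" using matvec_bound by blast
    obtain L where L: "L \<ge> 0" "\<forall>U k. k \<le> N \<longrightarrow> norm (traj A B U 0 k) \<le> L * seq_norm N U"
      using traj_bound by blast
    define SWx where "SWx = (\<Sum>i\<in>UNIV. 1 + wx $ i)"
    define SWu where "SWu = (\<Sum>i\<in>UNIV. 1 + wu $ i)"
    have SWx0: "SWx \<ge> 0" unfolding SWx_def using wx_nonneg by (intro sum_nonneg) (simp add: add_nonneg_nonneg)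
    have SWu0: "SWu \<ge> 0" unfolding SWu_def using wu_nonneg by (intro sum_nonneg) (simp add: add_nonneg_nonneg)
    obtain e where e: "e > 0" "(\<Union>x\<in>X0. ball x e) \<subseteq> interior (feasible_set A B Cx dx Cu du N)"
      using compact_subset_open_imp_ball_epsilon_subset[OF cX0 open_interior sub] by blast
    have ballF: "z \<in> feasible_set A B Cx dx Cu du N" if "x \<in> X0" "dist x z < e" for x z
      using e(2) that interior_subset by fastforce
    obtain Xb where Xb: "Xb > 0" "\<And>x. x \<in> X0 \<Longrightarrow> norm x \<le> Xb"
      using compact_imp_bounded[OF cX0] unfolding bounded_pos by blast
    define \<eta> where "\<eta> = e / (2 * Xb)"
    have eta: "\<eta> > 0" using e Xb by (simp add: \<eta>_def)
    define \<theta> where "\<theta> = \<eta> / (1 + \<eta>)"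
    have th: "\<theta> > 0" "\<theta> < 1" using eta by (auto simp: \<theta>_def field_simps)
    have scaledF: "(1 + \<eta>) *\<^sub>R x \<in> feasible_set A B Cx dx Cu du N" if x: "x \<in> X0" for x
    proof -
      have "dist x ((1 + \<eta>) *\<^sub>R x) = \<eta> * norm x" using eta by (simp add: dist_norm algebra_simps)
      also have "\<dots> \<le> \<eta> * Xb" using Xb(2)[OF x] eta by (intro mult_left_mono) auto
      also have "\<dots> < e" using e Xb by (simp add: \<eta>_def)
      finally show ?thesis using ballF[OF x] by blast
    qed
    have lnth: "- ln \<theta> > 0" using th by simp
    define BX where "BX = (\<Sum>i\<in>UNIV. (1 + wx $ i) * (- ln \<theta>))"
    define BU where "BU = (\<Sum>i\<in>UNIV. (1 + wu $ i) * (- ln \<theta>))"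
    have BX0: "BX \<ge> 0" unfolding BX_def using wx_nonneg lnth by (intro sum_nonneg mult_nonneg_nonneg) (auto simp: add_nonneg_nonneg)
    have BU0: "BU \<ge> 0" unfolding BU_def using wu_nonneg lnth by (intro sum_nonneg mult_nonneg_nonneg) (auto simp: add_nonneg_nonneg)
    define \<beta>1 where "\<beta>1 = real N * (KQ * Xmax\<^sup>2 + KR * Umax\<^sup>2 + \<epsilon> * BX + \<epsilon> * BU)"
    have b10: "\<beta>1 \<ge> 0" unfolding \<beta>1_def using KQ KR BX0 BU0 eps_pos by simp
    define dmin where "dmin = min (Min (range (\<lambda>i. dx $ i))) (Min (range (\<lambda>j. du $ j)))"
    have dmin: "dmin > 0" "\<forall>i. dmin \<le> dx $ i" "\<forall>j. dmin \<le> du $ j"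
    proof -
      have fx: "finite (range (\<lambda>i. dx $ i))" and nx: "range (\<lambda>i. dx $ i) \<noteq> {}" by auto
      have fu: "finite (range (\<lambda>j. du $ j))" and nu: "range (\<lambda>j. du $ j) \<noteq> {}" by auto
      have "Min (range (\<lambda>i. dx $ i)) > 0" using Min_in[OF fx nx] dx_pos by auto
      moreover have "Min (range (\<lambda>j. du $ j)) > 0" using Min_in[OF fu nu] du_pos by auto
      ultimately show "dmin > 0" unfolding dmin_def by simp
      show "\<forall>i. dmin \<le> dx $ i" unfolding dmin_def using Min_le[OF fx] by (simp add: min.coboundedI1)
      show "\<forall>j. dmin \<le> du $ j" unfolding dmin_def using Min_le[OF fu] by (simp add: min.coboundedI2)
    qed
    define X4 where "X4 = 4 * Xmax / e"
    define U4 where "U4 = 4 * Umax / e"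
    define KP1 where "KP1 = real N * ((KQ + \<epsilon> * SWx * KCx\<^sup>2 / 2) * X4\<^sup>2 + (KR + \<epsilon> * SWu * KCu\<^sup>2 / 2) * U4\<^sup>2)"
    have KP10: "KP1 \<ge> 0" unfolding KP1_def using KQ KR SWx0 SWu0 eps_pos by simp
    define c0 where "c0 = real N * (2*KQ*L\<^sup>2 + 2*KR + \<epsilon> * (2*SWx*KCx\<^sup>2*L\<^sup>2) + \<epsilon> * (2*SWu*KCu\<^sup>2)) + 2*KP1*L\<^sup>2"
    have c00: "c0 \<ge> 0" unfolding c0_def using KQ KR SWx0 SWu0 eps_pos KP10 by simp
    define \<delta>0 where "\<delta>0 = min (min 1 (\<theta> * dmin)) (dmin * exp (- (\<beta>1 + 1) / \<epsilon>))"
    have d0: "\<delta>0 > 0" unfolding \<delta>0_def using th dmin by simp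
    define \<mu> where "\<mu> = (\<lambda>t::real. (1 / (1 + c0)) * t)"
    have Kmu: "Kinf \<mu>" unfolding \<mu>_def using c00 by (intro Kinf_lin) simp
    show ?thesis
    proof (intro exI[of _ \<delta>0] conjI d0 exI[of _ \<mu>] Kmu allI impI ballI)
      fix \<delta> :: real and x0 :: "real^'n" and U0 :: "nat \<Rightarrow> real^'m" and iT :: "nat \<Rightarrow> nat" and k :: nat
      assume hd: "0 < \<delta> \<and> \<delta> \<le> \<delta>0" and x0: "x0 \<in> X0" and U0: "U0 \<in> seqs N"
      assume hyp: "seq_norm N (\<lambda>k. U0 k -
                   (THE U. U \<in> seqs N \<and> (\<forall>V\<in>seqs N.
                      cost_N A B N (stage_cost \<delta> \<epsilon> Q R Cx dx wx Cu du wu) (P \<delta>) U x0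
                      \<le> cost_N A B N (stage_cost \<delta> \<epsilon> Q R Cx dx wx Cu du wu) (P \<delta>) V x0)) k)
                 \<le> \<mu> \<delta>"
      have dpos: "\<delta> > 0" and d1: "\<delta> \<le> 1" and dth: "\<delta> \<le> \<theta> * dmin"
        and dexp: "\<delta> \<le> dmin * exp (- (\<beta>1 + 1) / \<epsilon>)" using hd unfolding \<delta>0_def by auto
      have thd: "\<theta> * dmin \<le> dmin" using th dmin by simp
      have dxg: "\<forall>i. \<delta> \<le> dx $ i" using dth thd dmin(2) by (meson order_trans)
      have dug: "\<forall>j. \<delta> \<le> du $ j" using dth thd dmin(3) by (meson order_trans)
      have dxth: "\<forall>i. \<delta> \<le> \<theta> * dx $ i" using dth dmin(2) th by (meson order_trans mult_left_mono less_imp_le)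
      have duth: "\<forall>j. \<delta> \<le> \<theta> * du $ j" using dth dmin(3) th by (meson order_trans mult_left_mono less_imp_le)
      have Pd: "pd (P \<delta>)" and ric: "let K = gainK A B R \<epsilon> (Mmat \<delta> Cu wu) (P \<delta>) in
          P \<delta> = transpose (A + B ** K) ** P \<delta> ** (A + B ** K)
                + transpose K ** (R + \<epsilon> *\<^sub>R Mmat \<delta> Cu wu) ** K + Q + \<epsilon> *\<^sub>R Mmat \<delta> Cx wx"
        using P_ric[OF dpos dxg dug] by auto
      have Ppos: "\<And>z. qf (P \<delta>) z \<ge> 0" using pd_qf[OF Pd] .
      note sg = stage_ge[OF dpos dxg dug wx_nonneg wu_nonneg wx_center wu_center Q_psd R_pd eps_pos]
      have Jst: "J \<delta> U x \<ge> stage_cost \<delta> \<epsilon> Q R Cx dx wx Cu du wu (traj A B U x j) (U j)" if "j < N" for U x j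
        unfolding J_def by (rule cost_ge_term(1)[OF sg(4) Ppos that])
      have ex1: "\<exists>!U. U \<in> seqs N \<and> (\<forall>V\<in>seqs N. J \<delta> U x0 \<le> J \<delta> V x0)"
      proof (rule argmin_unique[where R=R])
        show "continuous_on UNIV (\<lambda>U. J \<delta> U x0)" unfolding J_def by (rule cost_cont[OF dpos])
        show "qf R (U j) \<le> J \<delta> U x0" if "U \<in> seqs N" "j < N" for U j
          using Jst[OF that(2), of U x0] sg(3)[where x="traj A B U x0 j" and u="U j"] by linarith
        show "J \<delta> (\<lambda>k. (1/2) *\<^sub>R (U k + V k)) x0 \<le> (J \<delta> U x0 + J \<delta> V x0)/2 - (\<Sum>k<N. qf R (U k - V k))/4"
          for U V unfolding J_def
          by (rule cost_mid[OF dpos _ wx_nonneg wu_nonneg Q_psd]) (use eps_pos Ppos in auto)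
      qed (rule R_pd)
      then obtain T where T: "T \<in> seqs N" "\<And>V. V \<in> seqs N \<Longrightarrow> J \<delta> T x0 \<le> J \<delta> V x0" by blast
      have theT: "(THE U. U \<in> seqs N \<and> (\<forall>V\<in>seqs N.
                      cost_N A B N (stage_cost \<delta> \<epsilon> Q R Cx dx wx Cu du wu) (P \<delta>) U x0
                      \<le> cost_N A B N (stage_cost \<delta> \<epsilon> Q R Cx dx wx Cu du wu) (P \<delta>) V x0)) = T"
        by (rule the1_equality) (use ex1 T in \<open>auto simp: J_def\<close>)
      have JT: "J \<delta> T x0 \<le> \<beta>1"
      proof -
        obtain V where V: "V \<in> seqs N" "\<forall>k<N. (\<forall>i. dx $ i - (Cx *v traj A B V x0 k) $ i \<ge> (\<eta>/(1+\<eta>)) * dx $ i)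
           \<and> norm (traj A B V x0 k) \<le> Xmax
           \<and> (\<forall>j. du $ j - (Cu *v V k) $ j \<ge> (\<eta>/(1+\<eta>)) * du $ j) \<and> norm (V k) \<le> Umax"
           "traj A B V x0 N = 0"
          using feasible_scaled[OF scaledF[OF x0] eta Xmax(2) Umax(2) dx_pos du_pos] by blast
        have st: "stage_cost \<delta> \<epsilon> Q R Cx dx wx Cu du wu (traj A B V x0 k) (V k) \<le> KQ * Xmax\<^sup>2 + KR * Umax\<^sup>2 + \<epsilon> * BX + \<epsilon> * BU"
          if k: "k < N" for k
        proof -
          have m: "\<forall>i. dx $ i - (Cx *v traj A B V x0 k) $ i \<ge> \<theta> * dx $ i" "norm (traj A B V x0 k) \<le> Xmax"
             "\<forall>j. du $ j - (Cu *v V k) $ j \<ge> \<theta> * du $ j" "norm (V k) \<le> Umax"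
            using V(2) k unfolding \<theta>_def by auto
          have "(norm (traj A B V x0 k))\<^sup>2 \<le> Xmax\<^sup>2" using m(2) by (intro power_mono) auto
          then have 1: "qf Q (traj A B V x0 k) \<le> KQ * Xmax\<^sup>2"
            using KQ(2)[of "traj A B V x0 k"] mult_left_mono[OF _ KQ(1)] by (meson abs_le_D1 order_trans)
          have "(norm (V k))\<^sup>2 \<le> Umax\<^sup>2" using m(4) by (intro power_mono) auto
          then have 2: "qf R (V k) \<le> KR * Umax\<^sup>2"
            using KR(2)[of "V k"] mult_left_mono[OF _ KR(1)] by (meson abs_le_D1 order_trans)
          have 3: "recbar \<delta> Cx dx wx (traj A B V x0 k) \<le> BX"
            unfolding BX_def by (rule recbar_upper[OF dpos th(1) dxth wx_nonneg m(1)])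
          have 4: "recbar \<delta> Cu du wu (V k) \<le> BU"
            unfolding BU_def by (rule recbar_upper[OF dpos th(1) duth wu_nonneg m(3)])
          have r3: "\<epsilon> * recbar \<delta> Cx dx wx (traj A B V x0 k) \<le> \<epsilon> * BX" using 3 eps_pos by simp
          have r4: "\<epsilon> * recbar \<delta> Cu du wu (V k) \<le> \<epsilon> * BU" using 4 eps_pos by simp
          show ?thesis unfolding stage_qf using 1 2 r3 r4 by linarith
        qed
        have "J \<delta> V x0 = (\<Sum>k<N. stage_cost \<delta> \<epsilon> Q R Cx dx wx Cu du wu (traj A B V x0 k) (V k))"
          unfolding J_def cost_N_def using V(3) by simp
        also have "\<dots> \<le> real N * (KQ * Xmax\<^sup>2 + KR * Umax\<^sup>2 + \<epsilon> * BX + \<epsilon> * BU)"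
          by (rule sum_le_const) (rule st)
        finally have "J \<delta> V x0 \<le> \<beta>1" unfolding \<beta>1_def .
        then show ?thesis using T(2)[OF V(1)] by linarith
      qed
      have JU0: "J \<delta> U0 x0 \<le> \<beta>1 + 1"
      proof -
        define g where "g = 1 / \<delta>\<^sup>2"
        have dv: "\<And>x. x / \<delta>\<^sup>2 = x * g" unfolding g_def by simp
        have g1: "g \<ge> 1" unfolding g_def using dpos d1 by (simp add: power_le_one)
        let ?Mu = "Mmat \<delta> Cu wu" and ?Mx = "Mmat \<delta> Cx wx"
        have Psym: "transpose (P \<delta>) = P \<delta>" using Pd unfolding pd_def by blast
        have Rsym0: "transpose R = R" using R_pd unfolding pd_def by blast
        have Rsym: "transpose (R + \<epsilon> *\<^sub>R ?Mu) = R + \<epsilon> *\<^sub>R ?Mu"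
          by (simp add: transpose_add transpose_scalar Rsym0 Mmat_sym)
        have Mu0: "\<And>z. qf ?Mu z \<ge> 0" using Mmat_nonneg[OF wu_nonneg] .
        have Rpos: "\<And>z. qf (R + \<epsilon> *\<^sub>R ?Mu) z \<ge> 0"
          unfolding qf_add_mat qf_scaleR_mat using pd_qf[OF R_pd] Mu0 eps_pos by (simp add: add_nonneg_nonneg)
        have Ginv: "invertible (R + transpose B ** P \<delta> ** B + \<epsilon> *\<^sub>R ?Mu)"
        proof (rule invertible_from_pos)
          fix y :: "real^'m" assume "y \<noteq> 0"
          then have "qf R y > 0" using pd_qf_pos[OF R_pd] by blast
          moreover have "qf (P \<delta>) (B *v y) \<ge> 0" using Ppos .
          moreover have "\<epsilon> * qf ?Mu y \<ge> 0" using Mu0[of y] eps_pos by simp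
          ultimately show "qf (R + transpose B ** P \<delta> ** B + \<epsilon> *\<^sub>R ?Mu) y > 0"
            unfolding qf_add_mat qf_scaleR_mat qf_sandwich by linarith
        qed
        have ric': "P \<delta> = transpose (A + B ** gainK A B R \<epsilon> ?Mu (P \<delta>)) ** P \<delta> ** (A + B ** gainK A B R \<epsilon> ?Mu (P \<delta>))
               + transpose (gainK A B R \<epsilon> ?Mu (P \<delta>)) ** (R + \<epsilon> *\<^sub>R ?Mu) ** gainK A B R \<epsilon> ?Mu (P \<delta>) + (Q + \<epsilon> *\<^sub>R ?Mx)"
          using ric by (simp add: Let_def add.assoc)
        have step: "\<And>x u. qf (P \<delta>) x \<le> qf (P \<delta>) (A *v x + B *v u) + qf (Q + \<epsilon> *\<^sub>R ?Mx) x + qf (R + \<epsilon> *\<^sub>R ?Mu) u"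
          by (rule dare_step[OF Psym Ppos Rsym Rpos Ginv ric'])
        define a where "a = KQ + (\<epsilon> * SWx * KCx\<^sup>2 / 2) * g"
        define b where "b = KR + (\<epsilon> * SWu * KCu\<^sup>2 / 2) * g"
        have a0: "a \<ge> 0" and b0: "b \<ge> 0" unfolding a_def b_def using KQ KR SWx0 SWu0 eps_pos g1 by auto
        have qMb: "qf (Mmat \<delta> C w) z \<le> (SW * KC\<^sup>2 / 2) * g * (norm z)\<^sup>2"
          if "\<forall>i. w $ i \<ge> 0" "\<And>z. norm (C *v z) \<le> KC * norm z" "KC \<ge> 0" "SW = (\<Sum>i\<in>UNIV. 1 + w $ i)"
          for C :: "real^'a^'b" and w KC SW z
        proof -
          have "qf (Mmat \<delta> C w) z = (1/(2*\<delta>\<^sup>2)) * (\<Sum>i\<in>UNIV. (1 + w $ i) * ((C *v z) $ i)\<^sup>2)" by (rule qf_Mmat)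
          also have "\<dots> \<le> (1/(2*\<delta>\<^sup>2)) * (SW * KC\<^sup>2 * (norm z)\<^sup>2)"
            using wsum_bound[OF that(1-3), of z] that(4) by (intro mult_left_mono) auto
          also have "\<dots> = (SW * KC\<^sup>2 / 2) * g * (norm z)\<^sup>2" by (simp add: g_def field_simps)
          finally show ?thesis .
        qed
        have qt: "qf (Q + \<epsilon> *\<^sub>R ?Mx) z \<le> a * (norm z)\<^sup>2" for z
        proof -
          have 1: "qf Q z \<le> KQ * (norm z)\<^sup>2" using KQ(2)[of z] by linarith
          have 2: "\<epsilon> * qf ?Mx z \<le> \<epsilon> * ((SWx * KCx\<^sup>2 / 2) * g * (norm z)\<^sup>2)"
            using qMb[OF wx_nonneg KCx(2) KCx(1) SWx_def] eps_pos by (intro mult_left_mono) auto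
          show ?thesis unfolding qf_add_mat qf_scaleR_mat a_def using 1 2 by (simp add: algebra_simps)
        qed
        have rt: "qf (R + \<epsilon> *\<^sub>R ?Mu) z \<le> b * (norm z)\<^sup>2" for z
        proof -
          have 1: "qf R z \<le> KR * (norm z)\<^sup>2" using KR(2)[of z] by linarith
          have 2: "\<epsilon> * qf ?Mu z \<le> \<epsilon> * ((SWu * KCu\<^sup>2 / 2) * g * (norm z)\<^sup>2)"
            using qMb[OF wu_nonneg KCu(2) KCu(1) SWu_def] eps_pos by (intro mult_left_mono) auto
          show ?thesis unfolding qf_add_mat qf_scaleR_mat b_def using 1 2 by (simp add: algebra_simps)
        qed
        have KPg: "real N * (a * X4\<^sup>2 + b * U4\<^sup>2) \<le> KP1 * g"
        proof -
          have "a \<le> (KQ + \<epsilon> * SWx * KCx\<^sup>2 / 2) * g" unfolding a_def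
            by (rule lin_g) (use KQ SWx0 eps_pos g1 in auto)
          moreover have "b \<le> (KR + \<epsilon> * SWu * KCu\<^sup>2 / 2) * g" unfolding b_def
            by (rule lin_g) (use KR SWu0 eps_pos g1 in auto)
          ultimately have "a * X4\<^sup>2 + b * U4\<^sup>2 \<le> (KQ + \<epsilon> * SWx * KCx\<^sup>2 / 2) * g * X4\<^sup>2 + (KR + \<epsilon> * SWu * KCu\<^sup>2 / 2) * g * U4\<^sup>2"
            by (intro add_mono mult_right_mono) auto
          then have "real N * (a * X4\<^sup>2 + b * U4\<^sup>2) \<le> real N * ((KQ + \<epsilon> * SWx * KCx\<^sup>2 / 2) * g * X4\<^sup>2 + (KR + \<epsilon> * SWu * KCu\<^sup>2 / 2) * g * U4\<^sup>2)"
            by (intro mult_left_mono) auto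
          also have "\<dots> = KP1 * g" unfolding KP1_def by (simp add: algebra_simps)
          finally show ?thesis .
        qed
        have KP: "qf (P \<delta>) z \<le> (KP1 * g) * (norm z)\<^sup>2" for z
        proof -
          have "qf (P \<delta>) z \<le> real N * (a * (4*Xmax/e)\<^sup>2 + b * (4*Umax/e)\<^sup>2) * (norm z)\<^sup>2"
            by (rule Pbound[OF step qt rt a0 b0 ballF[OF p] e(1) Xmax(2) Umax(2)]) (use Xmax Umax in auto)
          also have "\<dots> \<le> (KP1 * g) * (norm z)\<^sup>2"
            using KPg unfolding X4_def U4_def by (intro mult_right_mono) auto
          finally show ?thesis .
        qed
        define D where "D = (\<lambda>k. U0 k - T k)"
        have Dseq: "D \<in> seqs N" using U0 T(1) by (simp add: seqs_def D_def)
        have TmD: "(\<lambda>k. T k - D k) \<in> seqs N" using Dseq T(1) by (simp add: seqs_def)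
        have TpD: "(\<lambda>k. T k + D k) = U0" by (simp add: D_def)
        have SD: "seq_norm N D \<le> \<delta> / (1 + c0)" using hyp unfolding theT D_def \<mu>_def by simp
        have cs: "J \<delta> (\<lambda>k. T k + D k) x0 + J \<delta> (\<lambda>k. T k - D k) x0 \<le> 2 * J \<delta> T x0
            + ((\<Sum>k<N. 2 * qf Q (traj A B D 0 k) + 2 * qf R (D k) + \<epsilon> * RX \<delta> Cx wx (traj A B D 0 k)
               + \<epsilon> * RX \<delta> Cu wu (D k)) + 2 * qf (P \<delta>) (traj A B D 0 N))"
          unfolding J_def by (rule cost_second[OF dpos _ wx_nonneg wu_nonneg]) (use eps_pos in auto)
        have qb: "(\<Sum>k<N. 2 * qf Q (traj A B D 0 k) + 2 * qf R (D k) + \<epsilon> * RX \<delta> Cx wx (traj A B D 0 k)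
               + \<epsilon> * RX \<delta> Cu wu (D k)) + 2 * qf (P \<delta>) (traj A B D 0 N)
           \<le> (real N * (2*KQ*L\<^sup>2 + 2*KR + \<epsilon> * (2 * SWx * KCx\<^sup>2 * L\<^sup>2 / \<delta>\<^sup>2)
              + \<epsilon> * (2 * SWu * KCu\<^sup>2 / \<delta>\<^sup>2)) + 2 * (KP1 * g) * L\<^sup>2) * (seq_norm N D)\<^sup>2"
          unfolding SWx_def SWu_def
          by (rule quad_bound[where D=D]) (use L KQ KR KP KP10 g1 KCx KCu wx_nonneg wu_nonneg eps_pos dpos in auto)
        have coef: "real N * (2*KQ*L\<^sup>2 + 2*KR + \<epsilon> * (2 * SWx * KCx\<^sup>2 * L\<^sup>2 / \<delta>\<^sup>2)
              + \<epsilon> * (2 * SWu * KCu\<^sup>2 / \<delta>\<^sup>2)) + 2 * (KP1 * g) * L\<^sup>2 \<le> c0 * g"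
        proof -
          have "2*KQ*L\<^sup>2 + 2*KR + \<epsilon> * (2 * SWx * KCx\<^sup>2 * L\<^sup>2 / \<delta>\<^sup>2) + \<epsilon> * (2 * SWu * KCu\<^sup>2 / \<delta>\<^sup>2)
              = (2*KQ*L\<^sup>2 + 2*KR) + (\<epsilon> * (2*SWx*KCx\<^sup>2*L\<^sup>2) + \<epsilon> * (2*SWu*KCu\<^sup>2)) * g"
            using dv by (simp add: algebra_simps)
          also have "\<dots> \<le> ((2*KQ*L\<^sup>2 + 2*KR) + (\<epsilon> * (2*SWx*KCx\<^sup>2*L\<^sup>2) + \<epsilon> * (2*SWu*KCu\<^sup>2))) * g"
            by (rule lin_g) (use KQ KR SWx0 SWu0 eps_pos g1 in auto)
          finally have "real N * (2*KQ*L\<^sup>2 + 2*KR + \<epsilon> * (2 * SWx * KCx\<^sup>2 * L\<^sup>2 / \<delta>\<^sup>2) + \<epsilon> * (2 * SWu * KCu\<^sup>2 / \<delta>\<^sup>2))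
             \<le> real N * (((2*KQ*L\<^sup>2 + 2*KR) + (\<epsilon> * (2*SWx*KCx\<^sup>2*L\<^sup>2) + \<epsilon> * (2*SWu*KCu\<^sup>2))) * g)"
            by (intro mult_left_mono) auto
          then show ?thesis unfolding c0_def by (simp add: algebra_simps)
        qed
        have S2: "(seq_norm N D)\<^sup>2 \<le> (\<delta> / (1 + c0))\<^sup>2" using SD seq_norm_nonneg by (intro power_mono) auto
        have "(real N * (2*KQ*L\<^sup>2 + 2*KR + \<epsilon> * (2 * SWx * KCx\<^sup>2 * L\<^sup>2 / \<delta>\<^sup>2)
              + \<epsilon> * (2 * SWu * KCu\<^sup>2 / \<delta>\<^sup>2)) + 2 * (KP1 * g) * L\<^sup>2) * (seq_norm N D)\<^sup>2
            \<le> (c0 * g) * (\<delta> / (1 + c0))\<^sup>2"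
          using coef S2 c00 g1 by (intro mult_mono) auto
        also have "\<dots> = c0 / (1 + c0)\<^sup>2" unfolding g_def using dpos by (simp add: field_simps power2_eq_square)
        also have "\<dots> \<le> 1"
        proof -
          have p: "(1 + c0)\<^sup>2 > 0" using c00 by simp
          have sq: "c0 * c0 \<ge> 0" using c00 by simp
          have l: "c0 \<le> (1 + c0)\<^sup>2" using sq c00 unfolding power2_eq_square by (simp add: algebra_simps)
          show ?thesis using p l by (simp add: divide_le_eq)
        qed
        finally have quad1: "(\<Sum>k<N. 2 * qf Q (traj A B D 0 k) + 2 * qf R (D k) + \<epsilon> * RX \<delta> Cx wx (traj A B D 0 k)
               + \<epsilon> * RX \<delta> Cu wu (D k)) + 2 * qf (P \<delta>) (traj A B D 0 N) \<le> 1" using qb by linarith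
        have "J \<delta> T x0 \<le> J \<delta> (\<lambda>k. T k - D k) x0" using T(2)[OF TmD] .
        then show ?thesis using cs quad1 JT unfolding TpD by linarith
      qed
      have clm: "snd (closed_loop A B N (kf \<delta>) (Psio \<delta>) iT x0 U0 k) \<in> seqs N \<and>
          J \<delta> (snd (closed_loop A B N (kf \<delta>) (Psio \<delta>) iT x0 U0 k)) (fst (closed_loop A B N (kf \<delta>) (Psio \<delta>) iT x0 U0 k))
          \<le> J \<delta> U0 x0"
      proof (rule cl_mono[OF _ _ U0])
        show "J \<delta> (shiftop N (kf \<delta>) U x) (A *v x + B *v U 0) \<le> J \<delta> U x" if "U \<in> seqs N" for U x
          using kf_dec[OF dpos dxg dug that, of x] sg(4)[where x=x and u="U 0"] unfolding J_def by linarith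
        show "Psio \<delta> U x \<in> seqs N \<and> J \<delta> (Psio \<delta> U x) x \<le> J \<delta> U x" if "U \<in> seqs N" for U x
          using Psio_seqs[OF dpos dxg dug that, of x] Psio_dec[OF dpos dxg dug that, of x]
            gamma_nonneg[OF dpos dxg dug that, of x] unfolding J_def by auto
      qed
      obtain x U where xU: "closed_loop A B N (kf \<delta>) (Psio \<delta>) iT x0 U0 k = (x, U)"
        by (cases "closed_loop A B N (kf \<delta>) (Psio \<delta>) iT x0 U0 k")
      have JxU: "J \<delta> U x \<le> \<beta>1 + 1" using clm JU0 xU by auto
      have N0: "0 < N" using N_pos by simp
      have stU: "stage_cost \<delta> \<epsilon> Q R Cx dx wx Cu du wu x (U 0) \<le> \<beta>1 + 1"
        using Jst[OF N0, of U x] JxU by simp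
      have big: "1/2 - ln \<delta> + ln dd > (\<beta>1 + 1)/\<epsilon> \<and> 1/2 - ln \<delta> + ln dd \<ge> 0" if "dmin \<le> dd" for dd
      proof -
        have "ln \<delta> \<le> ln (dmin * exp (- (\<beta>1 + 1) / \<epsilon>))"
          using dpos dexp dmin(1) by (subst ln_le_cancel_iff) auto
        also have "\<dots> = ln dmin - (\<beta>1 + 1) / \<epsilon>" using dmin(1) by (simp add: ln_mult minus_divide_left)
        finally have l1: "ln \<delta> \<le> ln dmin - (\<beta>1 + 1) / \<epsilon>" .
        have l2: "ln dmin \<le> ln dd" using dmin(1) that by simp
        have l3: "(\<beta>1 + 1) / \<epsilon> \<ge> 0" using b10 eps_pos by simp
        show ?thesis using l1 l2 l3 by linarith
      qed
      have cx: "\<forall>i. (Cx *v x) $ i \<le> dx $ i + zx $ i"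
      proof (rule ccontr)
        assume "\<not> (\<forall>i. (Cx *v x) $ i \<le> dx $ i + zx $ i)"
        then obtain i where i: "(Cx *v x) $ i > dx $ i" using zx by (meson add_increasing2 not_le)
        have "recbar \<delta> Cx dx wx x \<ge> 1/2 - ln \<delta> + ln (dx $ i)"
          by (rule recbar_violation[OF dpos dxg wx_nonneg wx_center i]) (use big dmin(2) in blast)
        then have "\<epsilon> * recbar \<delta> Cx dx wx x > \<epsilon> * ((\<beta>1 + 1)/\<epsilon>)"
          using big[of "dx $ i"] dmin(2) eps_pos by (meson less_le_trans mult_strict_left_mono)
        then have "\<epsilon> * recbar \<delta> Cx dx wx x > \<beta>1 + 1" using eps_pos by simp
        then show False using sg(1)[where x=x and u="U 0"] stU by linarith
      qed
      have cu: "\<forall>j. (Cu *v U 0) $ j \<le> du $ j + zu $ j"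
      proof (rule ccontr)
        assume "\<not> (\<forall>j. (Cu *v U 0) $ j \<le> du $ j + zu $ j)"
        then obtain j where j: "(Cu *v U 0) $ j > du $ j" using zu by (meson add_increasing2 not_le)
        have "recbar \<delta> Cu du wu (U 0) \<ge> 1/2 - ln \<delta> + ln (du $ j)"
          by (rule recbar_violation[OF dpos dug wu_nonneg wu_center j]) (use big dmin(3) in blast)
        then have "\<epsilon> * recbar \<delta> Cu du wu (U 0) > \<epsilon> * ((\<beta>1 + 1)/\<epsilon>)"
          using big[of "du $ j"] dmin(3) eps_pos by (meson less_le_trans mult_strict_left_mono)
        then have "\<epsilon> * recbar \<delta> Cu du wu (U 0) > \<beta>1 + 1" using eps_pos by simp
        then show False using sg(2)[where x=x and u="U 0"] stU by linarith
      qed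
      show "let (x, U) = closed_loop A B N (kf \<delta>) (Psio \<delta>) iT x0 U0 k in
                    (\<forall>i. (Cx *v x) $ i \<le> dx $ i + zx $ i) \<and>
                    (\<forall>j. (Cu *v U 0) $ j \<le> du $ j + zu $ j)"
        using cx cu xU by simp
    qed
  qed
qed

end
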